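(* Let $h:[\alpha,\beta]\to\mathbb R$ be a non-negative Lipschitz function and let $r\ge1$. Then there exists a sequence of non-negative Lipschitz functions $h_k:[\alpha,\beta]\to\mathbb R$ such that: (i) $\mathcal H^1(\Gamma_k)=r\,\mathcal H^1(\Gamma)$ for every $k$; (ii) $h_k(\alpha)=h(\alpha)$ and $h_k(\beta)=h(\beta)$ for every $k$; (iii) $h\le h_k$ for every $k$; (iv) $h_k\to h$ uniformly as $k\to\infty$; (v) $\mathcal H^1\llcorner\Gamma_k\stackrel{*}{\rightharpoonup} r\,\mathcal H^1\llcorner\Gamma$ as $k\to\infty$, where $\Gamma_k$ and $\Gamma$ denote the graphs of $h_k$ and $h$. *)

theory Defs
  imports "HOL-Analysis.Analysis"
begin

text \<open>Size-delta approximating outer measure for the one-dimensional Hausdorff measure,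
  normalised so that a set of diameter d counts d (standard normalisation: H^1 = L^1 on the line).\<close>
definition hausdorff1_delta :: "real \<Rightarrow> 'a::metric_space set \<Rightarrow> ennreal" where
  "hausdorff1_delta \<delta> A =
     (INF C \<in> {C :: nat \<Rightarrow> 'a set. A \<subseteq> (\<Union>i. C i) \<and> (\<forall>i. bounded (C i) \<and> diameter (C i) \<le> \<delta>)}.
        (\<Sum>i. ennreal (diameter (C i))))"

definition hausdorff1 :: "'a::metric_space set \<Rightarrow> ennreal" where
  "hausdorff1 A = (SUP \<delta> \<in> {0<..}. hausdorff1_delta \<delta> A)"

definition hausdorff1_restr :: "'a::metric_space set \<Rightarrow> 'a measure" where
  "hausdorff1_restr S = measure_of UNIV (sets borel) (\<lambda>A. hausdorff1 (A \<inter> S))"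

definition graph_on :: "real \<Rightarrow> real \<Rightarrow> (real \<Rightarrow> real) \<Rightarrow> (real \<times> real) set" where
  "graph_on a b f = {(x, f x) | x. x \<in> {a..b}}"

definition weak_star_conv :: "(nat \<Rightarrow> (real \<times> real) measure) \<Rightarrow> real \<Rightarrow> (real \<times> real) measure \<Rightarrow> bool" where
  "weak_star_conv \<mu>s c \<mu> \<longleftrightarrow>
     (\<forall>\<phi> :: real \<times> real \<Rightarrow> real. continuous_on UNIV \<phi> \<and> compact (closure {z. \<phi> z \<noteq> 0}) \<longrightarrow>
        (\<lambda>k. integral\<^sup>L (\<mu>s k) \<phi>) \<longlonglongrightarrow> c * integral\<^sup>L \<mu> \<phi>)"

end

theory Submission
  imports Defs
begin

definition hcov :: "real \<Rightarrow> 'a::metric_space set \<Rightarrow> (nat \<Rightarrow> 'a set) set" where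
  "hcov \<delta> A = {C. A \<subseteq> (\<Union>i. C i) \<and> (\<forall>i. bounded (C i) \<and> diameter (C i) \<le> \<delta>)}"

lemma hd_def': "hausdorff1_delta \<delta> A = (INF C\<in>hcov \<delta> A. \<Sum>i. ennreal (diameter (C i)))"
  unfolding hausdorff1_delta_def hcov_def by simp

lemma hd_mono: "A \<subseteq> B \<Longrightarrow> hausdorff1_delta \<delta> A \<le> hausdorff1_delta \<delta> B"
  unfolding hd_def' by (rule INF_superset_mono) (auto simp: hcov_def)

lemma hd_anti: "\<delta> \<le> \<delta>' \<Longrightarrow> hausdorff1_delta \<delta>' A \<le> hausdorff1_delta \<delta> A"
  unfolding hd_def' by (rule INF_superset_mono) (auto simp: hcov_def intro: order_trans)

lemma hd_le_cover: "C \<in> hcov \<delta> A \<Longrightarrow> hausdorff1_delta \<delta> A \<le> (\<Sum>i. ennreal (diameter (C i)))"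
  unfolding hd_def' by (rule INF_lower)

lemma hd_le_H: "0 < \<delta> \<Longrightarrow> hausdorff1_delta \<delta> A \<le> hausdorff1 A"
  unfolding hausdorff1_def by (rule SUP_upper) auto

lemma H_le_iff: "hausdorff1 A \<le> x \<longleftrightarrow> (\<forall>\<delta>>0. hausdorff1_delta \<delta> A \<le> x)"
  unfolding hausdorff1_def by (auto simp: SUP_le_iff)

lemma H_mono: "A \<subseteq> B \<Longrightarrow> hausdorff1 A \<le> hausdorff1 B"
  unfolding hausdorff1_def by (rule SUP_mono) (auto intro: hd_mono)

lemma H_singleton: "hausdorff1 {p} = 0"
proof -
  have "hausdorff1_delta \<delta> {p} \<le> 0" if "\<delta> > 0" for \<delta>
  proof -
    have "(\<lambda>i. {p}) \<in> hcov \<delta> {p}" using that by (auto simp: hcov_def)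
    from hd_le_cover[OF this] show ?thesis by simp
  qed
  then show ?thesis using H_le_iff[of "{p}" 0] by (simp add: le_zero_eq)
qed

lemma H_empty: "hausdorff1 ({}::'a::metric_space set) = 0"
proof -
  have "hausdorff1 ({}::'a set) \<le> hausdorff1 {undefined::'a}" by (rule H_mono) simp
  then show ?thesis by (simp add: H_singleton)
qed

lemma hd_countable_subadd:
  "hausdorff1_delta \<delta> (\<Union>n. A n) \<le> (\<Sum>n. hausdorff1_delta \<delta> (A n))"
proof (rule ennreal_le_epsilon)
  fix e :: real assume "0 < e" "(\<Sum>n. hausdorff1_delta \<delta> (A n)) < top"
  then have *: "\<And>n. hausdorff1_delta \<delta> (A n) < hausdorff1_delta \<delta> (A n) + e * (1/2)^Suc n"
    by (auto simp add: less_top dest!: ennreal_suminf_lessD)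
  have "\<forall>n. \<exists>B. B \<in> hcov \<delta> (A n) \<and> (\<Sum>i. ennreal (diameter (B i))) < hausdorff1_delta \<delta> (A n) + e * (1/2)^Suc n"
    using * unfolding hd_def' INF_less_iff by blast
  then obtain B where B: "\<And>n. B n \<in> hcov \<delta> (A n)"
    and Ble: "\<And>n. (\<Sum>i. ennreal (diameter (B n i))) \<le> hausdorff1_delta \<delta> (A n) + e * (1/2)^Suc n"
    by (metis less_imp_le)
  define C where "C = case_prod B o prod_decode"
  have C: "C \<in> hcov \<delta> (\<Union>n. A n)"
  proof -
    have "(\<Union>i. A i) \<subseteq> (\<Union>i. C i)"
    proof
      fix x assume "x \<in> (\<Union>i. A i)"
      then obtain n where "x \<in> A n" by auto
      moreover have "A n \<subseteq> (\<Union>i. B n i)" using B[of n] by (simp add: hcov_def)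
      ultimately have "x \<in> (\<Union>i. B n i)" by blast
      then obtain i where "x \<in> B n i" by auto
      then have "x \<in> C (prod_encode (n, i))" by (simp add: C_def)
      then show "x \<in> (\<Union>i. C i)" by blast
    qed
    moreover have "\<forall>i. bounded (C i) \<and> diameter (C i) \<le> \<delta>"
      using B by (auto simp: C_def hcov_def split: prod.splits)
    ultimately show ?thesis by (simp add: hcov_def)
  qed
  have "hausdorff1_delta \<delta> (\<Union>n. A n) \<le> (\<Sum>i. ennreal (diameter (C i)))"
    by (rule hd_le_cover[OF C])
  also have "\<dots> = (\<Sum>n. \<Sum>i. ennreal (diameter (B n i)))"
    unfolding C_def comp_def by (intro suminf_ennreal_2dimen) auto
  also have "\<dots> \<le> (\<Sum>n. hausdorff1_delta \<delta> (A n) + e * (1/2) ^ Suc n)"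
    by (intro suminf_le Ble) auto
  also have "... = (\<Sum>n. hausdorff1_delta \<delta> (A n)) + (\<Sum>n. ennreal e * ennreal ((1/2) ^ Suc n))"
    using \<open>0 < e\<close> by (subst suminf_add[symmetric])
                       (auto simp del: ennreal_suminf_cmult simp add: ennreal_mult[symmetric])
  also have "\<dots> = (\<Sum>n. hausdorff1_delta \<delta> (A n)) + e"
    unfolding ennreal_suminf_cmult
    by (subst suminf_ennreal_eq[OF zero_le_power power_half_series]) auto
  finally show "hausdorff1_delta \<delta> (\<Union>n. A n) \<le> (\<Sum>n. hausdorff1_delta \<delta> (A n)) + e" .
qed

lemma H_countable_subadd: "hausdorff1 (\<Union>n. A n) \<le> (\<Sum>n. hausdorff1 (A n))"
  unfolding H_le_iff
proof (intro allI impI)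
  fix \<delta> :: real assume "\<delta> > 0"
  have "hausdorff1_delta \<delta> (\<Union>n. A n) \<le> (\<Sum>n. hausdorff1_delta \<delta> (A n))"
    by (rule hd_countable_subadd)
  also have "\<dots> \<le> (\<Sum>n. hausdorff1 (A n))"
    by (intro suminf_le hd_le_H \<open>\<delta> > 0\<close>) auto
  finally show "hausdorff1_delta \<delta> (\<Union>n. A n) \<le> (\<Sum>n. hausdorff1 (A n))" .
qed

lemma countable_subadd_Un:
  fixes f :: "'b set \<Rightarrow> ennreal"
  assumes cs: "\<And>A. f (\<Union>n. A n) \<le> (\<Sum>n. f (A n))" and e: "f {} = 0"
  shows "f (X \<union> (\<Union>n. Y n)) \<le> f X + (\<Sum>n. f (Y n))"
proof -
  define A where "A = (\<lambda>n. case n of 0 \<Rightarrow> X | Suc m \<Rightarrow> Y m)"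
  have "X \<union> (\<Union>n. Y n) = (\<Union>n. A n)"
    by (auto simp: A_def split: nat.splits)
  then have "f (X \<union> (\<Union>n. Y n)) \<le> (\<Sum>n. f (A n))" using cs by simp
  also have "\<dots> = f (A 0) + (\<Sum>n. f (A (Suc n)))"
    using suminf_offset[of "\<lambda>n. f (A n)" 1] by (simp add: summableI add.commute)
  finally show ?thesis by (simp add: A_def)
qed

lemma subadd_binary:
  fixes f :: "'b set \<Rightarrow> ennreal"
  assumes cs: "\<And>A. f (\<Union>n. A n) \<le> (\<Sum>n. f (A n))" and e: "f {} = 0"
  shows "f (X \<union> Y) \<le> f X + f Y"
proof -
  have "f (X \<union> (\<Union>n. (case n of 0 \<Rightarrow> Y | Suc m \<Rightarrow> {}))) \<le> f X + (\<Sum>n. f (case n of 0 \<Rightarrow> Y | Suc m \<Rightarrow> {}))"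
    by (rule countable_subadd_Un[OF cs e])
  moreover have "(\<Union>n. (case n of 0 \<Rightarrow> Y | Suc m \<Rightarrow> {})) = Y"
    by (auto split: nat.splits)
  moreover have "(\<Sum>n. f (case n of 0 \<Rightarrow> Y | Suc m \<Rightarrow> {})) = f Y"
    by (subst suminf_finite[of "{0}"]) (auto simp: e split: nat.splits)
  ultimately show ?thesis by simp
qed

lemma H_subadd: "hausdorff1 (X \<union> Y) \<le> hausdorff1 X + hausdorff1 Y"
  by (rule subadd_binary[OF H_countable_subadd H_empty])

lemma hd_sep:
  assumes "0 < \<delta>" "\<delta> < d" and sep: "\<forall>a\<in>A. \<forall>b\<in>B. d \<le> dist a b"
  shows "hausdorff1_delta \<delta> A + hausdorff1_delta \<delta> B \<le> hausdorff1_delta \<delta> (A \<union> B)"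
  unfolding hd_def'[of \<delta> "A \<union> B"]
proof (rule INF_greatest)
  fix C assume C: "C \<in> hcov \<delta> (A \<union> B)"
  define CA where "CA = (\<lambda>i. if C i \<inter> A \<noteq> {} then C i else {})"
  define CB where "CB = (\<lambda>i. if C i \<inter> B \<noteq> {} then C i else {})"
  have CA: "CA \<in> hcov \<delta> A" using C \<open>0 < \<delta>\<close> by (fastforce simp: hcov_def CA_def)
  have CB: "CB \<in> hcov \<delta> B" using C \<open>0 < \<delta>\<close> by (fastforce simp: hcov_def CB_def)
  have le: "ennreal (diameter (CA i)) + ennreal (diameter (CB i)) \<le> ennreal (diameter (C i))" for i
  proof -
    have bd: "bounded (C i)" "diameter (C i) \<le> \<delta>" using C by (auto simp: hcov_def)
    have "\<not> (C i \<inter> A \<noteq> {} \<and> C i \<inter> B \<noteq> {})"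
    proof
      assume "C i \<inter> A \<noteq> {} \<and> C i \<inter> B \<noteq> {}"
      then obtain a b where ab: "a \<in> C i" "a \<in> A" "b \<in> C i" "b \<in> B" by blast
      then have "dist a b \<le> diameter (C i)" using diameter_bounded_bound[OF bd(1)] by blast
      moreover have "d \<le> dist a b" using sep ab by blast
      ultimately show False using bd \<open>\<delta> < d\<close> by linarith
    qed
    then show ?thesis by (auto simp: CA_def CB_def)
  qed
  have "hausdorff1_delta \<delta> A + hausdorff1_delta \<delta> B \<le> (\<Sum>i. ennreal (diameter (CA i))) + (\<Sum>i. ennreal (diameter (CB i)))"
    by (intro add_mono hd_le_cover CA CB)
  also have "\<dots> = (\<Sum>i. ennreal (diameter (CA i)) + ennreal (diameter (CB i)))"
    by (rule suminf_add) auto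
  also have "\<dots> \<le> (\<Sum>i. ennreal (diameter (C i)))"
    by (intro suminf_le le) auto
  finally show "hausdorff1_delta \<delta> A + hausdorff1_delta \<delta> B \<le> (\<Sum>i. ennreal (diameter (C i)))" .
qed

lemma H_sep:
  assumes "0 < d" and sep: "\<forall>a\<in>A. \<forall>b\<in>B. d \<le> dist a b"
  shows "hausdorff1 (A \<union> B) = hausdorff1 A + hausdorff1 B"
proof (rule antisym)
  show "hausdorff1 (A \<union> B) \<le> hausdorff1 A + hausdorff1 B" by (rule H_subadd)
  have "hausdorff1_delta \<delta>1 A + hausdorff1_delta \<delta>2 B \<le> hausdorff1 (A \<union> B)"
    if "\<delta>1 > 0" "\<delta>2 > 0" for \<delta>1 \<delta>2
  proof -
    define \<delta> where "\<delta> = min (min \<delta>1 \<delta>2) (d/2)"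
    have \<delta>: "0 < \<delta>" "\<delta> < d" "\<delta> \<le> \<delta>1" "\<delta> \<le> \<delta>2" using that \<open>0 < d\<close> by (auto simp: \<delta>_def)
    have "hausdorff1_delta \<delta>1 A + hausdorff1_delta \<delta>2 B \<le> hausdorff1_delta \<delta> A + hausdorff1_delta \<delta> B"
      by (intro add_mono hd_anti \<delta>)
    also have "\<dots> \<le> hausdorff1_delta \<delta> (A \<union> B)" by (rule hd_sep[OF \<delta>(1,2) sep])
    also have "\<dots> \<le> hausdorff1 (A \<union> B)" by (rule hd_le_H[OF \<delta>(1)])
    finally show ?thesis .
  qed
  note key = this
  have ne: "{0::real<..} \<noteq> {}" by auto
  show "hausdorff1 A + hausdorff1 B \<le> hausdorff1 (A \<union> B)"
    unfolding hausdorff1_def[of A] hausdorff1_def[of B]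
    apply (subst ennreal_SUP_add_left[symmetric, OF ne])
    apply (rule SUP_least)
    apply (subst ennreal_SUP_add_right[OF ne])
    apply (rule SUP_least)
    using key by auto
qed

lemma sum_even_odd_ennreal:
  fixes g :: "nat \<Rightarrow> ennreal"
  shows "(\<Sum>k<2*N. g k) = (\<Sum>i<N. g (2*i)) + (\<Sum>i<N. g (2*i+1))"
proof (induct N)
  case 0 then show ?case by simp
next
  case (Suc N)
  have "2 * Suc N = Suc (Suc (2*N))" by simp
  then show ?case using Suc by (simp add: add_ac)
qed

lemma closed_carath:
  fixes f :: "'a::metric_space set \<Rightarrow> ennreal"
  assumes mono: "\<And>A B. A \<subseteq> B \<Longrightarrow> f A \<le> f B"
    and cs: "\<And>A. f (\<Union>n. A n) \<le> (\<Sum>n. f (A n))" and emp: "f {} = 0"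
    and sep: "\<And>A B d. 0 < d \<Longrightarrow> \<forall>a\<in>A. \<forall>b\<in>B. d \<le> dist a b \<Longrightarrow> f (A \<union> B) = f A + f B"
    and F: "closed F"
  shows "f (X \<inter> F) + f (X - F) \<le> f X"
proof (cases "F = {} \<or> f X = top")
  case True then show ?thesis using emp by auto
next
  case False
  then have Fne: "F \<noteq> {}" and fin: "f X < top" by (auto simp: less_top)
  define D where "D x = infdist x F" for x
  define An where "An n = {x\<in>X. 1 / real (Suc n) \<le> D x}" for n
  define R where "R n = An (Suc n) - An n" for n
  have An_mono: "An m \<subseteq> An n" if "m \<le> n" for m n
  proof -
    have "1 / real (Suc n) \<le> 1 / real (Suc m)" using that by (simp add: frac_le)
    then show ?thesis by (auto simp: An_def)
  qed
  have RX: "R n \<subseteq> X" for n by (auto simp: R_def An_def)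
  have step1: "f (X \<inter> F) + f (An n) \<le> f X" for n
  proof -
    have "f ((X \<inter> F) \<union> An n) = f (X \<inter> F) + f (An n)"
    proof (rule sep[of "1 / real (Suc n)"])
      show "\<forall>a\<in>X \<inter> F. \<forall>b\<in>An n. 1 / real (Suc n) \<le> dist a b"
      proof (intro ballI)
        fix a b assume "a \<in> X \<inter> F" "b \<in> An n"
        then have "1 / real (Suc n) \<le> D b" "D b \<le> dist b a"
          by (auto simp: An_def D_def intro: infdist_le)
        then show "1 / real (Suc n) \<le> dist a b" by (simp add: dist_commute)
      qed
    qed simp
    moreover have "f ((X \<inter> F) \<union> An n) \<le> f X" by (rule mono) (auto simp: An_def)
    ultimately show ?thesis by simp
  qed
  have cover: "X - F \<subseteq> An n \<union> (\<Union>k. R (k + n))" for n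
  proof
    fix x assume x: "x \<in> X - F"
    then have "D x > 0" unfolding D_def using infdist_pos_not_in_closed[OF F Fne] by auto
    then obtain m where "inverse (real (Suc m)) < D x" using reals_Archimedean by blast
    then have xm: "x \<in> An m" using x by (auto simp: An_def field_simps)
    show "x \<in> An n \<union> (\<Union>k. R (k + n))"
    proof (cases "x \<in> An n")
      case False
      define m0 where "m0 = (LEAST m. x \<in> An m)"
      have xm0: "x \<in> An m0" unfolding m0_def by (rule LeastI[of "\<lambda>m. x \<in> An m" m, OF xm])
      have "n < m0"
      proof (rule ccontr)
        assume "\<not> n < m0"
        then have "An m0 \<subseteq> An n" by (intro An_mono) simp
        with xm0 False show False by blast
      qed
      then obtain m1 where m1: "m0 = Suc m1" "n \<le> m1" by (cases m0) auto
      have "x \<notin> An m1" using not_less_Least[of m1 "\<lambda>m. x \<in> An m"] m1 unfolding m0_def by auto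
      then have "x \<in> R ((m1 - n) + n)" using xm0 m1 by (simp add: R_def)
      then show ?thesis by blast
    qed simp
  qed
  have half: "(\<Sum>i<N. f (R (2*i+p))) = f (\<Union>i<N. R (2*i+p))" if "p \<le> 1" for N p
  proof (induct N)
    case 0 then show ?case by (simp add: emp)
  next
    case (Suc N)
    have eqU: "(\<Union>i<Suc N. R (2*i+p)) = (\<Union>i<N. R (2*i+p)) \<union> R (2*N+p)"
      by (auto simp: lessThan_Suc)
    have "f ((\<Union>i<N. R (2*i+p)) \<union> R (2*N+p)) = f (\<Union>i<N. R (2*i+p)) + f (R (2*N+p))"
    proof (cases "N = 0")
      case True then show ?thesis by (simp add: emp)
    next
      case False
      define d where "d = 1 / real (2*N+p) - 1 / real (2*N+p+1)"
      have "d > 0" using False by (simp add: d_def frac_less2)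
      show ?thesis
      proof (rule sep[OF \<open>d > 0\<close>], intro ballI)
        fix y z assume y: "y \<in> (\<Union>i<N. R (2*i+p))" and z: "z \<in> R (2*N+p)"
        then obtain i where i: "i < N" "y \<in> R (2*i+p)" by auto
        then have "1 / real (Suc (Suc (2*i+p))) \<le> D y" by (auto simp: R_def An_def)
        moreover have "1 / real (2*N+p) \<le> 1 / real (Suc (Suc (2*i+p)))"
          using i(1) by (intro frac_le) auto
        moreover have "D z < 1 / real (2*N+p+1)" using z by (auto simp: R_def An_def)
        moreover have "D y \<le> D z + dist y z" unfolding D_def by (rule infdist_triangle)
        ultimately show "d \<le> dist y z" unfolding d_def by (simp add: dist_commute)
      qed
    qed
    then show ?case using Suc eqU by simp
  qed
  have Rsum: "(\<Sum>k<N. f (R k)) \<le> 2 * f X" for N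
  proof -
    have "(\<Sum>k<N. f (R k)) \<le> (\<Sum>k<2*N. f (R k))" by (rule sum_mono2) auto
    also have "\<dots> = (\<Sum>i<N. f (R (2*i))) + (\<Sum>i<N. f (R (2*i+1)))"
      by (rule sum_even_odd_ennreal)
    also have "\<dots> \<le> f X + f X"
    proof (rule add_mono)
      have "(\<Sum>i<N. f (R (2*i+0))) = f (\<Union>i<N. R (2*i+0))" by (rule half) simp
      moreover have "f (\<Union>i<N. R (2*i+0)) \<le> f X" by (rule mono) (use RX in auto)
      ultimately show "(\<Sum>i<N. f (R (2*i))) \<le> f X" by simp
      have "(\<Sum>i<N. f (R (2*i+1))) = f (\<Union>i<N. R (2*i+1))" by (rule half) simp
      moreover have "f (\<Union>i<N. R (2*i+1)) \<le> f X" by (rule mono) (use RX in auto)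
      ultimately show "(\<Sum>i<N. f (R (2*i+1))) \<le> f X" by simp
    qed
    finally show ?thesis by (simp add: mult_2)
  qed
  define g where "g k = enn2real (f (R k))" for k
  have fRle: "f (R k) \<le> f X" for k by (rule mono[OF RX])
  have fR: "f (R k) = ennreal (g k)" for k
    unfolding g_def using fRle[of k] fin by (simp add: ennreal_enn2real_if less_top[symmetric]) (metis top.not_eq_extremum leD)
  have g0: "0 \<le> g k" for k by (simp add: g_def)
  have sg: "summable g"
  proof (rule summableI_nonneg_bounded[OF g0])
    fix N
    have "ennreal (\<Sum>k<N. g k) = (\<Sum>k<N. f (R k))" using g0 by (simp add: fR)
    also have "\<dots> \<le> 2 * f X" by (rule Rsum)
    also have "\<dots> = ennreal (2 * enn2real (f X))" using fin
      by (simp add: ennreal_mult ennreal_enn2real_if less_top[symmetric])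
    finally show "(\<Sum>k<N. g k) \<le> 2 * enn2real (f X)"
      by (subst (asm) ennreal_le_iff) auto
  qed
  show ?thesis
  proof (rule ennreal_le_epsilon)
    fix e :: real assume "0 < e"
    obtain N where N: "\<forall>n\<ge>N. norm (\<Sum>i. g (i + n)) < e" using suminf_exist_split[OF \<open>0 < e\<close> sg] by blast
    have sgN: "summable (\<lambda>i. g (i + N))" using sg by (rule summable_ignore_initial_segment)
    have "f (X - F) \<le> f (An N \<union> (\<Union>k. R (k + N)))" by (rule mono[OF cover])
    also have "\<dots> \<le> f (An N) + (\<Sum>k. f (R (k + N)))" by (rule countable_subadd_Un[OF cs emp])
    also have "(\<Sum>k. f (R (k + N))) = ennreal (\<Sum>k. g (k + N))"
      unfolding fR by (rule suminf_ennreal2[OF g0 sgN])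
    also have "\<dots> \<le> ennreal e"
      using N[rule_format, of N] by (intro ennreal_leI) auto
    finally have "f (X \<inter> F) + f (X - F) \<le> f (X \<inter> F) + f (An N) + ennreal e"
      by (simp add: add_mono add.assoc)
    also have "\<dots> \<le> f X + ennreal e" by (intro add_mono step1) auto
    finally show "f (X \<inter> F) + f (X - F) \<le> f X + ennreal e" .
  qed
qed

lemma HS_props:
  fixes S :: "'a::metric_space set"
  shows "\<And>A B. A \<subseteq> B \<Longrightarrow> hausdorff1 (A \<inter> S) \<le> hausdorff1 (B \<inter> S)"
    and "\<And>A. hausdorff1 ((\<Union>n. A n) \<inter> S) \<le> (\<Sum>n. hausdorff1 (A n \<inter> S))"
    and "hausdorff1 ({} \<inter> S) = 0"
    and "\<And>A B d. 0 < d \<Longrightarrow> \<forall>a\<in>A. \<forall>b\<in>B. d \<le> dist a b \<Longrightarrow>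
           hausdorff1 ((A \<union> B) \<inter> S) = hausdorff1 (A \<inter> S) + hausdorff1 (B \<inter> S)"
proof -
  show "\<And>A B. A \<subseteq> B \<Longrightarrow> hausdorff1 (A \<inter> S) \<le> hausdorff1 (B \<inter> S)"
    by (rule H_mono) auto
  show "hausdorff1 ((\<Union>n. A n) \<inter> S) \<le> (\<Sum>n. hausdorff1 (A n \<inter> S))" for A :: "nat \<Rightarrow> 'a set"
  proof -
    have "(\<Union>n. A n) \<inter> S = (\<Union>n. A n \<inter> S)" by auto
    then show ?thesis using H_countable_subadd[of "\<lambda>n. A n \<inter> S"] by simp
  qed
  show "hausdorff1 ({} \<inter> S) = 0" by (simp add: H_empty)
  show "hausdorff1 ((A \<union> B) \<inter> S) = hausdorff1 (A \<inter> S) + hausdorff1 (B \<inter> S)"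
    if "0 < d" "\<forall>a\<in>A. \<forall>b\<in>B. d \<le> dist a b" for A B :: "'a set" and d
    using H_sep[of d "A \<inter> S" "B \<inter> S"] that by (simp add: Int_Un_distrib2)
qed

lemma H_closed_split:
  fixes S :: "'a::metric_space set"
  assumes "closed F"
  shows "hausdorff1 (S \<inter> F) + hausdorff1 (S - F) = hausdorff1 S"
proof (rule antisym)
  show "hausdorff1 (S \<inter> F) + hausdorff1 (S - F) \<le> hausdorff1 S"
    by (rule closed_carath[where f=hausdorff1]) (simp_all add: H_mono H_countable_subadd H_empty H_sep assms)
  have "hausdorff1 S = hausdorff1 ((S \<inter> F) \<union> (S - F))" by (simp only: Int_Diff_Un)
  also have "\<dots> \<le> hausdorff1 (S \<inter> F) + hausdorff1 (S - F)" by (rule H_subadd)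
  finally show "hausdorff1 S \<le> hausdorff1 (S \<inter> F) + hausdorff1 (S - F)" .
qed

lemma H_restr_measure_space:
  fixes S :: "'a::metric_space set"
  shows "measure_space UNIV (sets borel) (\<lambda>A. hausdorff1 (A \<inter> S))"
proof -
  let ?f = "\<lambda>A. hausdorff1 (A \<inter> S)"
  note P = HS_props[where S=S]
  have sub2: "?f (X \<union> Y) \<le> ?f X + ?f Y" for X Y
    by (rule subadd_binary[of ?f, OF P(2) P(3)])
  have oms: "outer_measure_space (Pow UNIV) ?f"
    unfolding outer_measure_space_def positive_def increasing_def countably_subadditive_def
    using P by auto
  interpret sigma_algebra UNIV "Pow UNIV" by (rule sigma_algebra_Pow)
  define L where "L = lambda_system UNIV (Pow UNIV) ?f"
  have ms: "measure_space UNIV L ?f" unfolding L_def by (rule caratheodory_lemma[OF oms])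
  then have saL: "sigma_algebra UNIV L" by (simp add: measure_space_def)
  have closedL: "C \<in> L" if "closed C" for C
  proof -
    have "?f (x \<inter> C) + ?f (x - C) = ?f x" for x
    proof (rule antisym)
      show "?f (x \<inter> C) + ?f (x - C) \<le> ?f x"
        by (rule closed_carath[of ?f, OF P(1) P(2) P(3) P(4) that])
      have "?f x = ?f ((x \<inter> C) \<union> (x - C))" by (simp only: Int_Diff_Un)
      also have "\<dots> \<le> ?f (x \<inter> C) + ?f (x - C)" by (rule sub2)
      finally show "?f x \<le> ?f (x \<inter> C) + ?f (x - C)" .
    qed
    then show ?thesis unfolding L_def lambda_system_eq by auto
  qed
  have openL: "U \<in> L" if "open U" for U
  proof -
    have "- U \<in> L" using that by (intro closedL) (simp add: closed_Compl)
    then have "UNIV - (- U) \<in> L" using saL by (intro algebra.compl_sets) (auto simp: sigma_algebra_def)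
    then show ?thesis by simp
  qed
  have "sets borel \<subseteq> L"
    unfolding sets_borel using openL by (intro sigma_algebra.sigma_sets_subset[OF saL]) auto
  moreover have "sigma_algebra UNIV (sets borel)"
    using sets.sigma_algebra_axioms[of borel] by simp
  ultimately show ?thesis using measure_down[OF ms] by blast
qed

lemma sets_H_restr[simp]: "sets (hausdorff1_restr S) = sets borel"
  unfolding hausdorff1_restr_def
  using sets_measure_of[of "sets borel" UNIV] sets.sigma_sets_eq[of borel] by simp

lemma space_H_restr[simp]: "space (hausdorff1_restr S) = UNIV"
  using sets_eq_imp_space_eq[OF sets_H_restr[of S]] by simp

lemma emeasure_H_restr:
  assumes "A \<in> sets borel"
  shows "emeasure (hausdorff1_restr S) A = hausdorff1 (A \<inter> S)"
  unfolding hausdorff1_restr_def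
  using H_restr_measure_space[of S] assms
  by (intro emeasure_measure_of_sigma) (auto simp: measure_space_def)


lemma diameter_le_metric:
  fixes S :: "'a::metric_space set"
  assumes "0 \<le> d" "\<And>x y. x \<in> S \<Longrightarrow> y \<in> S \<Longrightarrow> dist x y \<le> d"
  shows "diameter S \<le> d"
  using assms by (auto simp: diameter_def intro!: cSUP_least)

lemma H_lipschitz_image:
  fixes g :: "'a::metric_space \<Rightarrow> 'b::metric_space"
  assumes M: "M > 0" and lip: "\<And>x y. x \<in> A \<Longrightarrow> y \<in> A \<Longrightarrow> dist (g x) (g y) \<le> M * dist x y"
  shows "hausdorff1 (g ` A) \<le> ennreal M * hausdorff1 A"
  unfolding H_le_iff[of "g ` A"]
proof (intro allI impI)
  fix \<delta>' :: real assume "\<delta>' > 0"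
  define \<delta> where "\<delta> = \<delta>' / M"
  have "\<delta> > 0" using M \<open>\<delta>' > 0\<close> by (simp add: \<delta>_def)
  have cov: "hausdorff1_delta \<delta>' (g ` A) \<le> ennreal M * (\<Sum>i. ennreal (diameter (C i)))"
    if C: "C \<in> hcov \<delta> A" for C
  proof -
    define C' where "C' i = g ` (C i \<inter> A)" for i
    have bdC: "bounded (C i)" "diameter (C i) \<le> \<delta>" for i using C by (auto simp: hcov_def)
    have dC': "dist u v \<le> M * diameter (C i)" if "u \<in> C' i" "v \<in> C' i" for u v i
    proof -
      from that(1) obtain x where x: "x \<in> C i \<inter> A" "u = g x" unfolding C'_def by blast
      from that(2) obtain y where y: "y \<in> C i \<inter> A" "v = g y" unfolding C'_def by blast
      note xy = x y
      then have "dist u v \<le> M * dist x y" "dist x y \<le> diameter (C i)"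
        using xy lip diameter_bounded_bound[OF bdC(1)] by auto
      then show ?thesis using M by (meson mult_left_mono less_imp_le order_trans)
    qed
    have diam0: "0 \<le> diameter (C i)" for i by (rule diameter_ge_0[OF bdC(1)])
    have diamC': "diameter (C' i) \<le> M * diameter (C i)" for i
      by (rule diameter_le_metric) (use M diam0 dC' in auto)
    have "C' \<in> hcov \<delta>' (g ` A)"
    proof -
      have "g ` A \<subseteq> (\<Union>i. C' i)" using C unfolding hcov_def C'_def by blast
      moreover have "bounded (C' i)" for i
        unfolding bounded_two_points using dC' by blast
      moreover have "diameter (C' i) \<le> \<delta>'" for i
      proof -
        have "M * diameter (C i) \<le> M * \<delta>" using bdC M by simp
        also have "M * \<delta> = \<delta>'" using M by (simp add: \<delta>_def)
        finally show ?thesis using diamC'[of i] by simp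
      qed
      ultimately show ?thesis by (auto simp: hcov_def)
    qed
    then have "hausdorff1_delta \<delta>' (g ` A) \<le> (\<Sum>i. ennreal (diameter (C' i)))" by (rule hd_le_cover)
    also have "\<dots> \<le> (\<Sum>i. ennreal M * ennreal (diameter (C i)))"
      by (intro suminf_le) (auto simp: ennreal_mult[symmetric] M less_imp_le diam0 diamC' ennreal_leI)
    also have "\<dots> = ennreal M * (\<Sum>i. ennreal (diameter (C i)))" by (rule ennreal_suminf_cmult)
    finally show ?thesis .
  qed
  have inv: "ennreal (1/M) * ennreal M = 1" using M by (simp add: ennreal_mult[symmetric])
  have "ennreal (1/M) * hausdorff1_delta \<delta>' (g ` A) \<le> hausdorff1_delta \<delta> A"
    unfolding hd_def'[of \<delta> A]
  proof (rule INF_greatest)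
    fix C assume "C \<in> hcov \<delta> A"
    then have "ennreal (1/M) * hausdorff1_delta \<delta>' (g ` A) \<le> ennreal (1/M) * (ennreal M * (\<Sum>i. ennreal (diameter (C i))))"
      by (intro mult_left_mono cov) auto
    also have "\<dots> = (\<Sum>i. ennreal (diameter (C i)))" by (simp add: mult.assoc[symmetric] inv)
    finally show "ennreal (1/M) * hausdorff1_delta \<delta>' (g ` A) \<le> (\<Sum>i. ennreal (diameter (C i)))" .
  qed
  then have "ennreal M * (ennreal (1/M) * hausdorff1_delta \<delta>' (g ` A)) \<le> ennreal M * hausdorff1_delta \<delta> A"
    by (rule mult_left_mono) auto
  also have "ennreal M * (ennreal (1/M) * hausdorff1_delta \<delta>' (g ` A)) = hausdorff1_delta \<delta>' (g ` A)"
    by (simp add: mult.assoc[symmetric] inv mult.commute[of "ennreal M"])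
  also have "ennreal M * hausdorff1_delta \<delta> A \<le> ennreal M * hausdorff1 A"
    by (intro mult_left_mono hd_le_H \<open>\<delta> > 0\<close>) auto
  finally show "hausdorff1_delta \<delta>' (g ` A) \<le> ennreal M * hausdorff1 A" by simp
qed

lemma real_Sup_Inf_diam:
  fixes C :: "real set"
  assumes "bounded C" "C \<noteq> {}"
  shows "Sup C - Inf C \<le> diameter C"
proof -
  have bda: "bdd_above C" and bdb: "bdd_below C"
    using assms(1) by (auto intro: bounded_imp_bdd_above bounded_imp_bdd_below)
  have "Sup C \<le> diameter C + Inf C"
  proof (rule cSup_least[OF assms(2)])
    fix x assume x: "x \<in> C"
    have "x - diameter C \<le> Inf C"
    proof (rule cInf_greatest[OF assms(2)])
      fix y assume "y \<in> C"
      then have "dist x y \<le> diameter C" using diameter_bounded_bound[OF assms(1) x] by auto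
      then show "x - diameter C \<le> y" by (simp add: dist_real_def)
    qed
    then show "x \<le> diameter C + Inf C" by simp
  qed
  then show ?thesis by simp
qed

lemma H_real_interval_ge:
  fixes a b :: real
  assumes "a \<le> b"
  shows "ennreal (b - a) \<le> hausdorff1 {a..b}"
proof -
  have "ennreal (b - a) \<le> hausdorff1_delta 1 {a..b}"
    unfolding hd_def'
  proof (rule INF_greatest)
    fix C assume C: "C \<in> hcov 1 {a..b}"
    define I where "I i = (if C i = {} then {} else {Inf (C i) .. Sup (C i)})" for i
    have bd: "bounded (C i)" for i using C by (auto simp: hcov_def)
    have CI: "C i \<subseteq> I i" for i
    proof
      fix x assume x: "x \<in> C i"
      then show "x \<in> I i"
        using cInf_lower[OF x bounded_imp_bdd_below[OF bd[of i]]] cSup_upper[OF x bounded_imp_bdd_above[OF bd[of i]]]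
        by (auto simp: I_def)
    qed
    have mI: "emeasure lborel (I i) \<le> ennreal (diameter (C i))" for i
    proof (cases "C i = {}")
      case False
      have le: "Inf (C i) \<le> Sup (C i)" using False bd[of i]
        by (meson bounded_imp_bdd_above bounded_imp_bdd_below cInf_le_cSup)
      show ?thesis using False le real_Sup_Inf_diam[OF bd[of i] False] by (simp add: I_def ennreal_leI)
    qed (simp add: I_def)
    have "ennreal (b - a) = emeasure lborel {a..b}" using assms by simp
    also have "\<dots> \<le> emeasure lborel (\<Union>i. I i)"
    proof (rule emeasure_mono)
      show "{a..b} \<subseteq> (\<Union>i. I i)" using C CI unfolding hcov_def by blast
    qed (auto simp: I_def)
    also have "\<dots> \<le> (\<Sum>i. emeasure lborel (I i))"
      by (rule emeasure_subadditive_countably) (auto simp: I_def)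
    also have "\<dots> \<le> (\<Sum>i. ennreal (diameter (C i)))" by (intro suminf_le mI) auto
    finally show "ennreal (b - a) \<le> (\<Sum>i. ennreal (diameter (C i)))" .
  qed
  also have "\<dots> \<le> hausdorff1 {a..b}" by (rule hd_le_H) simp
  finally show ?thesis .
qed

lemma H_real_interval_le:
  fixes a b :: real
  assumes "a < b"
  shows "hausdorff1 {a..b} \<le> ennreal (b - a)"
  unfolding H_le_iff
proof (intro allI impI)
  fix \<delta> :: real assume "\<delta> > 0"
  obtain n :: nat where n: "(b - a) / \<delta> < n" using reals_Archimedean2 by blast
  then have "n > 0" using assms \<open>\<delta> > 0\<close> by (cases n) (auto simp: field_simps)
  define w where "w = (b - a) / n"
  have w: "w > 0" "w \<le> \<delta>" "n * w = b - a" using n \<open>n > 0\<close> assms \<open>\<delta> > 0\<close>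
    by (auto simp: w_def field_simps)
  define C where "C i = (if i < n then {a + i * w .. a + (i+1) * w} else {})" for i
  have "C \<in> hcov \<delta> {a..b}"
  proof -
    have "x \<in> (\<Union>i. C i)" if x: "x \<in> {a..b}" for x
    proof -
      define i where "i = min (n - 1) (nat \<lfloor>(x - a) / w\<rfloor>)"
      have "i < n" using \<open>n > 0\<close> by (simp add: i_def)
      have fl: "real_of_int \<lfloor>(x - a) / w\<rfloor> \<le> (x - a) / w" "(x - a) / w < real_of_int \<lfloor>(x - a) / w\<rfloor> + 1"
        by linarith+
      have fl0: "0 \<le> \<lfloor>(x - a) / w\<rfloor>" using x w by simp
      have "a + i * w \<le> x \<and> x \<le> a + (i+1) * w"
      proof (cases "nat \<lfloor>(x - a) / w\<rfloor> \<le> n - 1")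
        case True
        then have "real i = real_of_int \<lfloor>(x - a) / w\<rfloor>" using fl0 by (simp add: i_def)
        have f1: "real_of_int \<lfloor>(x - a) / w\<rfloor> * w \<le> x - a" using fl(1) w(1) by (simp add: le_divide_eq)
        have f2: "x - a < (real_of_int \<lfloor>(x - a) / w\<rfloor> + 1) * w" using pos_divide_less_eq[OF w(1), of "x - a" "real_of_int \<lfloor>(x - a) / w\<rfloor> + 1"] fl(2) by simp
        show ?thesis using f1 f2 \<open>real i = _\<close> by (simp add: algebra_simps)
      next
        case False
        then have i: "i = n - 1" by (simp add: i_def)
        have "real n \<le> real_of_int \<lfloor>(x - a) / w\<rfloor>" using False fl0 \<open>n > 0\<close> by linarith
        then have "real n \<le> (x - a) / w" using fl by linarith
        then have "x \<ge> b" using w by (simp add: field_simps)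
        then have "x = b" using x by simp
        moreover have "real i = real n - 1" using i \<open>n > 0\<close> by simp
        then have e: "real i * w = real n * w - w" by (simp add: left_diff_distrib)
        ultimately show ?thesis using w e by (simp add: algebra_simps)
      qed
      then have "x \<in> C i" using \<open>i < n\<close> by (simp add: C_def add.commute)
      then show ?thesis by blast
    qed
    moreover have "diameter (C i) \<le> \<delta>" for i using w by (simp add: C_def algebra_simps)
    ultimately show ?thesis by (auto simp: hcov_def C_def)
  qed
  then have "hausdorff1_delta \<delta> {a..b} \<le> (\<Sum>i. ennreal (diameter (C i)))" by (rule hd_le_cover)
  also have "(\<Sum>i. ennreal (diameter (C i))) = (\<Sum>i<n. ennreal (diameter (C i)))"
    by (rule suminf_finite) (auto simp: C_def)
  also have "\<dots> = (\<Sum>i<n. ennreal w)" using w by (intro sum.cong) (auto simp: C_def algebra_simps)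
  also have "\<dots> = ennreal (b - a)" using w by (simp add: ennreal_of_nat_eq_real_of_nat ennreal_mult[symmetric])
  finally show "hausdorff1_delta \<delta> {a..b} \<le> ennreal (b - a)" .
qed

lemma H_connected_ge:
  fixes K :: "'a::real_inner set"
  assumes "connected K" "p \<in> K" "q \<in> K"
  shows "ennreal (dist p q) \<le> hausdorff1 K"
proof (cases "p = q")
  case True then show ?thesis by simp
next
  case False
  define d where "d = dist p q"
  have d: "d > 0" using False by (simp add: d_def)
  define u where "u = (1 / d) *\<^sub>R (q - p)"
  have dn: "d = norm (q - p)" by (metis d_def dist_commute dist_norm)
  have nu: "norm u = 1" using d by (simp add: u_def dn)
  define P where "P z = inner (z - p) u" for z
  have lipP: "dist (P x) (P y) \<le> 1 * dist x y" for x y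
  proof -
    have "dist (P x) (P y) = \<bar>inner (x - y) u\<bar>" by (simp add: P_def dist_real_def inner_diff_left)
    also have "\<dots> \<le> norm (x - y) * norm u" by (rule Cauchy_Schwarz_ineq2)
    finally show ?thesis using nu by (simp add: dist_norm)
  qed
  have "connected (P ` K)"
    by (rule connected_continuous_image[OF _ assms(1)]) (auto simp: P_def intro!: continuous_intros)
  moreover have "P p = 0" by (simp add: P_def)
  moreover have "P q = d"
  proof -
    have "P q = (1/d) * inner (q - p) (q - p)" by (simp add: P_def u_def)
    also have "inner (q - p) (q - p) = d * d" by (simp add: dn power2_norm_eq_inner[symmetric] power2_eq_square)
    finally show ?thesis using d by simp
  qed
  ultimately have "{0..d} \<subseteq> P ` K" using assms by (metis connected_contains_Icc imageI)
  then have "ennreal d \<le> hausdorff1 (P ` K)"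
    using H_real_interval_ge[of 0 d] d H_mono[of "{0..d}" "P ` K"] by (simp add: order_trans)
  also have "\<dots> \<le> ennreal 1 * hausdorff1 K" by (rule H_lipschitz_image) (use lipP in auto)
  finally show ?thesis by (simp add: d_def)
qed


lemma graph_on_eq: "graph_on a b f = (\<lambda>x. (x, f x)) ` {a..b}"
  by (auto simp: graph_on_def)

lemma graph_on_cong: "(\<And>x. x \<in> {a..b} \<Longrightarrow> f x = g x) \<Longrightarrow> graph_on a b f = graph_on a b g"
  by (auto simp: graph_on_def)

lemma H_graph_split:
  assumes "a \<le> m" "m \<le> b"
  shows "hausdorff1 (graph_on a b f) = hausdorff1 (graph_on a m f) + hausdorff1 (graph_on m b f)"
proof -
  define F :: "(real \<times> real) set" where "F = {z. fst z \<le> m}"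
  have cF: "closed F" unfolding F_def by (intro closed_Collect_le continuous_intros)
  have e1: "graph_on a b f \<inter> F = graph_on a m f" using assms by (auto simp: graph_on_def F_def)
  have s1: "graph_on a b f - F \<subseteq> graph_on m b f" using assms by (auto simp: graph_on_def F_def)
  have s2: "graph_on m b f \<subseteq> (graph_on a b f - F) \<union> {(m, f m)}"
    using assms by (auto simp: graph_on_def F_def)
  have "hausdorff1 (graph_on a b f - F) = hausdorff1 (graph_on m b f)"
  proof (rule antisym)
    show "hausdorff1 (graph_on a b f - F) \<le> hausdorff1 (graph_on m b f)" by (rule H_mono[OF s1])
    have "hausdorff1 (graph_on m b f) \<le> hausdorff1 ((graph_on a b f - F) \<union> {(m, f m)})" by (rule H_mono[OF s2])
    also have "\<dots> \<le> hausdorff1 (graph_on a b f - F) + hausdorff1 {(m, f m)}" by (rule H_subadd)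
    finally show "hausdorff1 (graph_on m b f) \<le> hausdorff1 (graph_on a b f - F)" by (simp add: H_singleton)
  qed
  then show ?thesis using H_closed_split[OF cF, of "graph_on a b f"] e1 by simp
qed

lemma H_graph_cells:
  assumes "0 \<le> w"
  shows "hausdorff1 (graph_on a (a + real n * w) f) = (\<Sum>j<n. hausdorff1 (graph_on (a + real j * w) (a + real j * w + w) f))"
proof (induct n)
  case 0
  have "graph_on a a f = {(a, f a)}" by (auto simp: graph_on_def)
  then show ?case by (simp add: H_singleton)
next
  case (Suc n)
  have "hausdorff1 (graph_on a (a + real (Suc n) * w) f) =
        hausdorff1 (graph_on a (a + real n * w) f) + hausdorff1 (graph_on (a + real n * w) (a + real (Suc n) * w) f)"
    using assms by (intro H_graph_split) (auto simp: algebra_simps)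
  then show ?case using Suc by (simp add: algebra_simps)
qed

lemma dist_graph_pts:
  "dist (x, f x) (y, f y) \<le> dist x y + dist (f x) (f y)"
proof -
  have "dist (x, f x) (y, f y) = sqrt ((dist x y)\<^sup>2 + (dist (f x) (f y))\<^sup>2)" by (simp add: dist_Pair_Pair)
  also have "\<dots> \<le> dist x y + dist (f x) (f y)" by (rule sqrt_sum_squares_le_sum) auto
  finally show ?thesis .
qed

lemma H_graph_upper:
  fixes f :: "real \<Rightarrow> real"
  assumes lip: "L-lipschitz_on {a..b} f" and "a \<le> b"
  shows "hausdorff1 (graph_on a b f) \<le> ennreal ((1 + L) * (b - a))"
proof (cases "a = b")
  case True
  then have "graph_on a b f = {(a, f a)}" by (auto simp: graph_on_def)
  then show ?thesis by (simp add: H_singleton)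
next
  case False
  then have ab: "a < b" using assms by simp
  have L0: "0 \<le> L" using lip by (simp add: lipschitz_on_def)
  have "hausdorff1 ((\<lambda>x. (x, f x)) ` {a..b}) \<le> ennreal (1 + L) * hausdorff1 {a..b}"
  proof (rule H_lipschitz_image)
    show "0 < 1 + L" using L0 by simp
    fix x y assume "x \<in> {a..b}" "y \<in> {a..b}"
    then have "dist (f x) (f y) \<le> L * dist x y" using lip by (simp add: lipschitz_on_def)
    then show "dist (x, f x) (y, f y) \<le> (1 + L) * dist x y"
      using dist_graph_pts[of x f y] by (simp add: algebra_simps)
  qed
  also have "\<dots> \<le> ennreal (1 + L) * ennreal (b - a)"
    by (intro mult_left_mono H_real_interval_le ab) auto
  also have "\<dots> = ennreal ((1 + L) * (b - a))" using L0 ab by (simp add: ennreal_mult)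
  finally show ?thesis by (simp add: graph_on_eq)
qed

lemma H_graph_lower:
  fixes f :: "real \<Rightarrow> real"
  assumes "continuous_on {a..b} f" "a \<le> b"
  shows "ennreal (dist (a, f a) (b, f b)) \<le> hausdorff1 (graph_on a b f)"
proof -
  have "connected ((\<lambda>x. (x, f x)) ` {a..b})"
    by (intro connected_continuous_image continuous_on_Pair continuous_on_id assms(1)) simp
  then show ?thesis unfolding graph_on_eq using assms(2) by (intro H_connected_ge) auto
qed

lemma H_graph_perturb:
  fixes f T :: "real \<Rightarrow> real"
  assumes lipT: "K-lipschitz_on {a..b} T"
  shows "hausdorff1 (graph_on a b (\<lambda>x. f x + c * T x)) \<le> ennreal (1 + \<bar>c\<bar> * K) * hausdorff1 (graph_on a b f)"
proof -
  have K0: "0 \<le> K" using lipT by (simp add: lipschitz_on_def)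
  define \<Phi> :: "real \<times> real \<Rightarrow> real \<times> real" where "\<Phi> z = (fst z, snd z + c * T (fst z))" for z
  have img: "graph_on a b (\<lambda>x. f x + c * T x) = \<Phi> ` graph_on a b f"
    by (auto simp: graph_on_def \<Phi>_def image_iff)
  have "hausdorff1 (\<Phi> ` graph_on a b f) \<le> ennreal (1 + \<bar>c\<bar> * K) * hausdorff1 (graph_on a b f)"
  proof (rule H_lipschitz_image)
    show "0 < 1 + \<bar>c\<bar> * K" using K0 by (simp add: add_pos_nonneg)
    fix p q assume "p \<in> graph_on a b f" "q \<in> graph_on a b f"
    then obtain x y where xy: "x \<in> {a..b}" "y \<in> {a..b}" "p = (x, f x)" "q = (y, f y)"
      by (auto simp: graph_on_def)
    have "\<Phi> p - \<Phi> q = (p - q) + (0, c * (T x - T y))"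
      using xy by (simp add: \<Phi>_def algebra_simps)
    then have h1: "dist (\<Phi> p) (\<Phi> q) \<le> norm (p - q) + norm ((0::real), c * (T x - T y))"
      unfolding dist_norm by (metis norm_triangle_ineq)
    have h1': "norm ((0::real), c * (T x - T y)) = \<bar>c\<bar> * dist (T x) (T y)"
      by (simp add: norm_Pair dist_real_def abs_mult)
    have h2: "dist (T x) (T y) \<le> K * dist x y" using lipT xy by (simp add: lipschitz_on_def)
    have h3: "dist x y \<le> dist p q" using dist_fst_le[of p q] xy by simp
    have "\<bar>c\<bar> * dist (T x) (T y) \<le> \<bar>c\<bar> * (K * dist p q)"
      using h2 h3 K0 by (meson abs_ge_zero mult_left_mono order_trans)
    then show "dist (\<Phi> p) (\<Phi> q) \<le> (1 + \<bar>c\<bar> * K) * dist p q"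
      using h1 h1' by (simp add: dist_norm algebra_simps)
  qed
  then show ?thesis by (simp add: img)
qed


definition tent :: "real \<Rightarrow> real \<Rightarrow> real \<Rightarrow> real" where
  "tent a w x = max 0 (1 - \<bar>x - (a + w/2)\<bar> * (2 / w))"

lemma tent_nonneg: "0 \<le> tent a w x" by (simp add: tent_def)

lemma tent_le1: "0 < w \<Longrightarrow> tent a w x \<le> 1" by (simp add: tent_def)

lemma tent_out:
  assumes "0 < w" "x \<le> a \<or> a + w \<le> x"
  shows "tent a w x = 0"
proof -
  have "w / 2 \<le> \<bar>x - (a + w/2)\<bar>" using assms by auto
  then have "w / 2 * (2 / w) \<le> \<bar>x - (a + w/2)\<bar> * (2 / w)" using assms by (intro mult_right_mono) auto
  then have "1 \<le> \<bar>x - (a + w/2)\<bar> * (2 / w)" using assms by simp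
  then show ?thesis by (simp add: tent_def)
qed

lemma tent_mid: "0 < w \<Longrightarrow> tent a w (a + w/2) = 1" by (simp add: tent_def)

lemma aux_abs: "0 \<le> (c::real) \<Longrightarrow> \<bar>(1 - p*c) - (1 - q*c)\<bar> = \<bar>q - p\<bar> * c"
proof -
  assume c: "0 \<le> c"
  have "(1 - p*c) - (1 - q*c) = (q - p) * c" by algebra
  then show ?thesis using c by (simp add: abs_mult)
qed

lemma tent_lip:
  assumes "0 < w"
  shows "(2 / w)-lipschitz_on X (tent a w)"
proof (rule lipschitz_onI)
  show "0 \<le> 2 / w" using assms by simp
  fix x y
  have "dist (tent a w x) (tent a w y) \<le> \<bar>(1 - \<bar>x - (a + w/2)\<bar> * (2 / w)) - (1 - \<bar>y - (a + w/2)\<bar> * (2 / w))\<bar>"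
    unfolding tent_def dist_real_def by (auto simp: max_def)
  also have "\<dots> = \<bar>\<bar>y - (a + w/2)\<bar> - \<bar>x - (a + w/2)\<bar>\<bar> * (2 / w)"
    using assms by (intro aux_abs) simp
  also have "\<dots> \<le> \<bar>x - y\<bar> * (2 / w)"
    using assms by (intro mult_right_mono) auto
  finally show "dist (tent a w x) (tent a w y) \<le> 2 / w * dist x y" by (simp add: dist_real_def mult.commute)
qed

lemma cell_exists:
  fixes h :: "real \<Rightarrow> real"
  assumes w: "0 < w" and lip: "L-lipschitz_on {a..a+w} h" and eta: "0 < \<eta>" and r: "1 \<le> r"
    and cond: "(L + r * (1 + L)) * w \<le> 2 * \<eta>"
  shows "\<exists>t\<in>{0..1}. hausdorff1 (graph_on a (a+w) (\<lambda>x. h x + (t * \<eta>) * tent a w x))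
            = ennreal r * hausdorff1 (graph_on a (a+w) h)"
proof -
  define K where "K = 2 / w"
  have K: "0 < K" using w by (simp add: K_def)
  have L0: "0 \<le> L" using lip by (simp add: lipschitz_on_def)
  define g where "g t = (\<lambda>x. h x + (t * \<eta>) * tent a w x)" for t
  define B where "B = (1 + (L + \<eta> * K)) * w"
  define \<psi> where "\<psi> t = enn2real (hausdorff1 (graph_on a (a+w) (g t)))" for t
  have lipT: "K-lipschitz_on {a..a+w} (tent a w)" unfolding K_def by (rule tent_lip[OF w])
  have Hle: "hausdorff1 (graph_on a (a+w) (g t)) \<le> ennreal B" if "t \<in> {0..1}" for t
  proof -
    have "(L + \<bar>t * \<eta>\<bar> * K)-lipschitz_on {a..a+w} (g t)"
      unfolding g_def by (intro lipschitz_on_add lip lipschitz_on_cmult_real lipT)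
    moreover have "L + \<bar>t * \<eta>\<bar> * K \<le> L + \<eta> * K"
      using that eta K by (auto simp: abs_mult intro!: mult_right_mono mult_left_le_one_le)
    ultimately have "(L + \<eta> * K)-lipschitz_on {a..a+w} (g t)" by (meson lipschitz_on_mono order_refl)
    then have "hausdorff1 (graph_on a (a+w) (g t)) \<le> ennreal ((1 + (L + \<eta> * K)) * (a + w - a))"
      using w by (intro H_graph_upper) auto
    then show ?thesis by (simp add: B_def)
  qed
  have Heq: "hausdorff1 (graph_on a (a+w) (g t)) = ennreal (\<psi> t)" if "t \<in> {0..1}" for t
    using Hle[OF that] unfolding \<psi>_def by (simp add: ennreal_enn2real_if) (metis ennreal_neq_top top.not_eq_extremum leD le_less_trans)
  have \<psi>B: "\<psi> t \<le> B" if "t \<in> {0..1}" for t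
  proof -
    have "ennreal (\<psi> t) \<le> ennreal B" using Hle[OF that] Heq[OF that] by simp
    moreover have "0 \<le> B" using w L0 eta K by (simp add: B_def)
    ultimately show ?thesis by (simp add: ennreal_le_iff)
  qed
  have \<psi>0: "0 \<le> \<psi> t" for t by (simp add: \<psi>_def)
  have pert: "\<psi> s \<le> \<psi> t + \<bar>s - t\<bar> * (\<eta> * K * B)" if "s \<in> {0..1}" "t \<in> {0..1}" for s t
  proof -
    have gs: "g s = (\<lambda>x. g t x + ((s - t) * \<eta>) * tent a w x)"
      by (simp add: g_def algebra_simps fun_eq_iff)
    have "ennreal (\<psi> s) \<le> ennreal (1 + \<bar>(s - t) * \<eta>\<bar> * K) * ennreal (\<psi> t)"
      using H_graph_perturb[OF lipT, of "g t" "(s - t) * \<eta>"] Heq[OF that(1)] Heq[OF that(2)] gs by simp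
    also have "ennreal (1 + \<bar>(s - t) * \<eta>\<bar> * K) * ennreal (\<psi> t) = ennreal ((1 + \<bar>(s - t) * \<eta>\<bar> * K) * \<psi> t)"
      using \<psi>0[of t] K by (intro ennreal_mult[symmetric]) auto
    finally have "\<psi> s \<le> (1 + \<bar>(s - t) * \<eta>\<bar> * K) * \<psi> t"
      using \<psi>0[of t] K by (subst (asm) ennreal_le_iff) auto
    also have "\<dots> = \<psi> t + \<bar>s - t\<bar> * (\<eta> * K) * \<psi> t" using eta by (simp add: abs_mult distrib_right)
    also have "\<dots> \<le> \<psi> t + \<bar>s - t\<bar> * (\<eta> * K) * B"
      using \<psi>B[OF that(2)] eta K by (intro add_left_mono mult_left_mono) auto
    finally show ?thesis by (simp add: mult.assoc)
  qed
  have cont: "continuous_on {0..1} \<psi>"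
  proof (rule lipschitz_on_continuous_on)
    show "(\<eta> * K * B)-lipschitz_on {0..1} \<psi>"
    proof (rule lipschitz_onI)
      show "0 \<le> \<eta> * K * B" using w L0 eta K by (simp add: B_def)
      fix s t :: real assume st: "s \<in> {0..1}" "t \<in> {0..1}"
      show "dist (\<psi> s) (\<psi> t) \<le> \<eta> * K * B * dist s t"
        using pert[OF st] pert[OF st(2) st(1)] by (simp add: dist_real_def abs_minus_commute algebra_simps abs_le_iff)
    qed
  qed
  define ell where "ell = \<psi> 0"
  have g0: "g 0 = h" by (simp add: g_def fun_eq_iff)
  have H0: "hausdorff1 (graph_on a (a+w) h) = ennreal ell" using Heq[of 0] by (simp add: g0 ell_def)
  have ellle: "ell \<le> (1 + L) * w"
  proof -
    have "ennreal ell \<le> ennreal ((1 + L) * (a + w - a))" using H0 H_graph_upper[OF lip] w by (metis less_eq_real_def add_increasing2 less_add_same_cancel1)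
    then show ?thesis using w L0 by (simp add: ennreal_le_iff)
  qed
  have \<psi>1: "2 * \<eta> - L * w \<le> \<psi> 1"
  proof -
    define m where "m = a + w/2"
    have g1a: "g 1 a = h a" using w by (simp add: g_def tent_out)
    have g1b: "g 1 (a+w) = h (a+w)" using w by (simp add: g_def tent_out)
    have g1m: "g 1 m = h m + \<eta>" using w by (simp add: g_def tent_mid m_def)
    have lipg: "(L + \<bar>1 * \<eta>\<bar> * K)-lipschitz_on {a..a+w} (g 1)"
      unfolding g_def by (intro lipschitz_on_add lip lipschitz_on_cmult_real lipT)
    have cg: "continuous_on {a..a+w} (g 1)" by (rule lipschitz_on_continuous_on[OF lipg])
    have "dist (h m) (h a) \<le> L * dist m a" by (rule lipschitz_onD[OF lip]) (use w in \<open>auto simp: m_def\<close>)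
    then have hm1: "\<bar>h m - h a\<bar> \<le> L * (w/2)" using w by (simp add: dist_real_def m_def)
    have "dist (h (a+w)) (h m) \<le> L * dist (a+w) m" by (rule lipschitz_onD[OF lip]) (use w in \<open>auto simp: m_def\<close>)
    then have hm2: "\<bar>h (a+w) - h m\<bar> \<le> L * (w/2)" using w by (simp add: dist_real_def m_def)
    have d1: "\<eta> - L * (w/2) \<le> dist (a, g 1 a) (m, g 1 m)"
    proof -
      have "dist (g 1 a) (g 1 m) \<le> dist (a, g 1 a) (m, g 1 m)" using dist_snd_le[of "(a, g 1 a)" "(m, g 1 m)"] by simp
      then have e: "\<bar>h a - (h m + \<eta>)\<bar> \<le> dist (a, g 1 a) (m, g 1 m)" using g1a g1m by (simp add: dist_real_def)
      show ?thesis using e hm1 by (smt (verit))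
    qed
    have d2: "\<eta> - L * (w/2) \<le> dist (m, g 1 m) (a+w, g 1 (a+w))"
    proof -
      have "dist (g 1 m) (g 1 (a+w)) \<le> dist (m, g 1 m) (a+w, g 1 (a+w))" using dist_snd_le[of "(m, g 1 m)" "(a+w, g 1 (a+w))"] by simp
      then have e: "\<bar>h m + \<eta> - h (a+w)\<bar> \<le> dist (m, g 1 m) (a+w, g 1 (a+w))" using g1b g1m by (simp add: dist_real_def)
      show ?thesis using e hm2 by (smt (verit))
    qed
    have "hausdorff1 (graph_on a (a+w) (g 1)) = hausdorff1 (graph_on a m (g 1)) + hausdorff1 (graph_on m (a+w) (g 1))"
      using w by (intro H_graph_split) (auto simp: m_def)
    moreover have "ennreal (dist (a, g 1 a) (m, g 1 m)) \<le> hausdorff1 (graph_on a m (g 1))"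
      using w by (intro H_graph_lower continuous_on_subset[OF cg]) (auto simp: m_def)
    moreover have "ennreal (dist (m, g 1 m) (a+w, g 1 (a+w))) \<le> hausdorff1 (graph_on m (a+w) (g 1))"
      using w by (intro H_graph_lower continuous_on_subset[OF cg]) (auto simp: m_def)
    ultimately have "ennreal (dist (a, g 1 a) (m, g 1 m) + dist (m, g 1 m) (a+w, g 1 (a+w))) \<le> ennreal (\<psi> 1)"
      using Heq[of 1] by (simp add: ennreal_plus[symmetric] del: ennreal_plus) (metis add_mono ennreal_plus zero_le_dist)
    then have "dist (a, g 1 a) (m, g 1 m) + dist (m, g 1 m) (a+w, g 1 (a+w)) \<le> \<psi> 1"
      using \<psi>0[of 1] by (subst (asm) ennreal_le_iff) (auto simp del: ennreal_plus)
    then show ?thesis using d1 d2 by simp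
  qed
  have "r * ell \<le> r * ((1 + L) * w)" using ellle r by simp
  also have "\<dots> \<le> 2 * \<eta> - L * w" using cond by (simp add: algebra_simps)
  finally have up: "r * ell \<le> \<psi> 1" using \<psi>1 by simp
  have lo: "\<psi> 0 \<le> r * ell" using r \<psi>0[of 0] by (simp add: ell_def mult_le_cancel_right1)
  obtain t where t: "0 \<le> t" "t \<le> 1" "\<psi> t = r * ell" using IVT'[of \<psi> 0 "r * ell" 1, OF lo up _ cont] by auto
  have "hausdorff1 (graph_on a (a+w) (g t)) = ennreal (r * ell)" using Heq[of t] t by simp
  also have "\<dots> = ennreal r * hausdorff1 (graph_on a (a+w) h)"
    using r \<psi>0[of 0] by (simp add: H0 ennreal_mult ell_def)
  finally show ?thesis using t unfolding g_def by auto
qed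


lemma cell_locate:
  fixes w :: real
  assumes w: "0 < w" and x: "\<alpha> \<le> x" "x < \<alpha> + real n * w"
  shows "\<exists>j<n. \<alpha> + real j * w \<le> x \<and> x < \<alpha> + real j * w + w"
proof -
  define j where "j = nat \<lfloor>(x - \<alpha>) / w\<rfloor>"
  have fl0: "0 \<le> \<lfloor>(x - \<alpha>) / w\<rfloor>" using x w by simp
  have fl: "real_of_int \<lfloor>(x - \<alpha>) / w\<rfloor> \<le> (x - \<alpha>) / w" "(x - \<alpha>) / w < real_of_int \<lfloor>(x - \<alpha>) / w\<rfloor> + 1"
    by linarith+
  have rj: "real j = real_of_int \<lfloor>(x - \<alpha>) / w\<rfloor>" using fl0 by (simp add: j_def)
  have f1: "real j * w \<le> x - \<alpha>" using fl(1) w rj by (simp add: le_divide_eq)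
  have f2: "x - \<alpha> < (real j + 1) * w" using pos_divide_less_eq[OF w, of "x - \<alpha>" "real j + 1"] fl(2) rj by simp
  have "real j * w < real n * w" using f1 x by simp
  then have "j < n" using w by simp
  then show ?thesis using f1 f2 by (intro exI[of _ j]) (auto simp: algebra_simps)
qed

lemma cell_unique:
  fixes w :: real
  assumes w: "0 < w"
    and i: "\<alpha> + real i * w \<le> x" "x < \<alpha> + real i * w + w"
    and j: "\<alpha> + real j * w \<le> x" "x < \<alpha> + real j * w + w"
  shows "i = j"
proof (rule ccontr)
  assume "i \<noteq> j"
  then consider "i < j" | "j < i" by linarith
  then show False
  proof cases
    case 1
    then have "real i + 1 \<le> real j" by simp
    then have "(real i + 1) * w \<le> real j * w" using w by (intro mult_right_mono) auto
    then show False using i j by (simp add: algebra_simps)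
  next
    case 2
    then have "real j + 1 \<le> real i" by simp
    then have "(real j + 1) * w \<le> real i * w" using w by (intro mult_right_mono) auto
    then show False using i j by (simp add: algebra_simps)
  qed
qed

lemma tent_sum_cell:
  fixes w :: real
  assumes w: "0 < w" and j: "j < n" and x: "\<alpha> + real j * w \<le> x" "x \<le> \<alpha> + real j * w + w"
  shows "(\<Sum>i<n. c i * tent (\<alpha> + real i * w) w x) = c j * tent (\<alpha> + real j * w) w x"
proof -
  have "(\<Sum>i<n. c i * tent (\<alpha> + real i * w) w x) = (\<Sum>i\<in>{j}. c i * tent (\<alpha> + real i * w) w x)"
  proof (rule sum.mono_neutral_right)
    show "\<forall>i\<in>{..<n} - {j}. c i * tent (\<alpha> + real i * w) w x = 0"
    proof
      fix i assume "i \<in> {..<n} - {j}"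
      then have "i \<noteq> j" by auto
      then consider "i < j" | "j < i" by linarith
      then have "x \<le> \<alpha> + real i * w \<or> \<alpha> + real i * w + w \<le> x"
      proof cases
        case 1
        then have "real i + 1 \<le> real j" by simp
        then have "(real i + 1) * w \<le> real j * w" using w by (intro mult_right_mono) auto
        then show ?thesis using x by (simp add: algebra_simps)
      next
        case 2
        then have "real j + 1 \<le> real i" by simp
        then have "(real j + 1) * w \<le> real i * w" using w by (intro mult_right_mono) auto
        then show ?thesis using x by (simp add: algebra_simps)
      qed
      then show "c i * tent (\<alpha> + real i * w) w x = 0" using tent_out[OF w] by simp
    qed
  qed (use j in auto)
  then show ?thesis by simp
qed

lemma tent_sum_out:
  fixes w :: real
  assumes w: "0 < w" and x: "x \<le> \<alpha> \<or> \<alpha> + real n * w \<le> x"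
  shows "(\<Sum>i<n. c i * tent (\<alpha> + real i * w) w x) = 0"
proof (rule sum.neutral, intro ballI)
  fix i assume "i \<in> {..<n}"
  then have "real i + 1 \<le> real n" by simp
  then have "(real i + 1) * w \<le> real n * w" using w by (intro mult_right_mono) auto
  moreover have "0 \<le> real i * w" using w by simp
  ultimately have "x \<le> \<alpha> + real i * w \<or> \<alpha> + real i * w + w \<le> x" using x by (auto simp: algebra_simps)
  then show "c i * tent (\<alpha> + real i * w) w x = 0" using tent_out[OF w] by simp
qed

definition strip :: "real \<Rightarrow> real \<Rightarrow> (real \<times> real) set" where
  "strip a b = {z. a \<le> fst z \<and> fst z < b}"

lemma strip_borel: "strip a b \<in> sets borel"
proof -
  have "strip a b = {z::real\<times>real. a \<le> fst z} \<inter> {z. fst z < b}" by (auto simp: strip_def)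
  moreover have "closed {z::real\<times>real. a \<le> fst z}" by (intro closed_Collect_le continuous_intros)
  moreover have "open {z::real\<times>real. fst z < b}" by (intro open_Collect_less continuous_intros)
  ultimately show ?thesis by auto
qed

lemma H_minus_point: "hausdorff1 (X - {p}) = hausdorff1 X"
proof (rule antisym)
  show "hausdorff1 (X - {p}) \<le> hausdorff1 X" by (rule H_mono) auto
  have "hausdorff1 X \<le> hausdorff1 ((X - {p}) \<union> {p})" by (rule H_mono) auto
  also have "\<dots> \<le> hausdorff1 (X - {p}) + hausdorff1 {p}" by (rule H_subadd)
  finally show "hausdorff1 X \<le> hausdorff1 (X - {p})" by (simp add: H_singleton)
qed

lemma strip_graph:
  assumes "\<alpha> \<le> a" "a \<le> b" "b \<le> \<beta>"
  shows "hausdorff1 (strip a b \<inter> graph_on \<alpha> \<beta> g) = hausdorff1 (graph_on a b g)"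
proof -
  have "strip a b \<inter> graph_on \<alpha> \<beta> g = graph_on a b g - {(b, g b)}"
    using assms by (auto simp: strip_def graph_on_def less_le)
  then show ?thesis by (simp add: H_minus_point)
qed

lemma graph_borel:
  assumes "continuous_on {\<alpha>..\<beta>} g"
  shows "graph_on \<alpha> \<beta> g \<in> sets borel"
proof -
  have "compact (graph_on \<alpha> \<beta> g)" unfolding graph_on_eq
    by (intro compact_continuous_image continuous_on_Pair continuous_on_id assms) simp
  then show ?thesis by (intro borel_closed compact_imp_closed)
qed

lemma restr_finite:
  assumes "hausdorff1 S < \<infinity>"
  shows "finite_measure (hausdorff1_restr S)"
  by (rule finite_measureI) (use assms in \<open>simp add: emeasure_H_restr\<close>)

lemma restr_measure:
  assumes "A \<in> sets borel"
  shows "measure (hausdorff1_restr S) A = enn2real (hausdorff1 (A \<inter> S))"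
  using assms by (simp add: measure_def emeasure_H_restr)

lemma restr_AE:
  assumes "continuous_on {\<alpha>..\<beta>} g"
  shows "AE z in hausdorff1_restr (graph_on \<alpha> \<beta> g). z \<in> graph_on \<alpha> \<beta> g \<and> z \<noteq> (\<beta>, g \<beta>)"
proof (rule AE_I')
  define N where "N = - (graph_on \<alpha> \<beta> g - {(\<beta>, g \<beta>)})"
  have pb: "{(\<beta>, g \<beta>)} \<in> sets borel" by (intro borel_closed closed_singleton)
  have "graph_on \<alpha> \<beta> g - {(\<beta>, g \<beta>)} \<in> sets borel" using graph_borel[OF assms] pb by auto
  then have "space borel - (graph_on \<alpha> \<beta> g - {(\<beta>, g \<beta>)}) \<in> sets borel" by (rule sets.compl_sets)
  then have Nb: "N \<in> sets borel" by (simp add: N_def Compl_eq_Diff_UNIV)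
  have "emeasure (hausdorff1_restr (graph_on \<alpha> \<beta> g)) N = hausdorff1 (N \<inter> graph_on \<alpha> \<beta> g)"
    by (rule emeasure_H_restr[OF Nb])
  also have "\<dots> \<le> hausdorff1 {(\<beta>, g \<beta>)}" by (rule H_mono) (auto simp: N_def)
  finally have "emeasure (hausdorff1_restr (graph_on \<alpha> \<beta> g)) N = 0" by (simp add: H_singleton)
  then show "N \<in> null_sets (hausdorff1_restr (graph_on \<alpha> \<beta> g))" using Nb by (auto intro: null_setsI)
  show "{z \<in> space (hausdorff1_restr (graph_on \<alpha> \<beta> g)). \<not> (z \<in> graph_on \<alpha> \<beta> g \<and> z \<noteq> (\<beta>, g \<beta>))} \<subseteq> N"
    by (auto simp: N_def)
qed

lemma dist_pair_le: "dist (x::real, y::real) (x', y') \<le> dist x x' + dist y y'"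
proof -
  have "dist (x, y) (x', y') = sqrt ((dist x x')\<^sup>2 + (dist y y')\<^sup>2)" by (simp add: dist_Pair_Pair)
  also have "\<dots> \<le> dist x x' + dist y y'" by (rule sqrt_sum_squares_le_sum) auto
  finally show ?thesis .
qed

lemma approx_integral:
  fixes \<phi> :: "real \<times> real \<Rightarrow> real" and g h :: "real \<Rightarrow> real"
  assumes n: "0 < n" and w: "0 < w" and \<beta>: "\<beta> = \<alpha> + real n * w"
    and contg: "continuous_on {\<alpha>..\<beta>} g" and fin: "hausdorff1 (graph_on \<alpha> \<beta> g) < \<infinity>"
    and lip: "L-lipschitz_on {\<alpha>..\<beta>} h"
    and gh: "\<And>x. x \<in> {\<alpha>..\<beta>} \<Longrightarrow> h x \<le> g x \<and> g x \<le> h x + \<eta>"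
    and hb: "\<And>x. x \<in> {\<alpha>..\<beta>} \<Longrightarrow> 0 \<le> h x \<and> h x + \<eta> \<le> Hb"
    and \<phi>c: "continuous_on UNIV \<phi>"
    and uc: "\<And>z z'. z \<in> {\<alpha>..\<beta>} \<times> {0..Hb} \<Longrightarrow> z' \<in> {\<alpha>..\<beta>} \<times> {0..Hb} \<Longrightarrow> dist z' z < \<delta> \<Longrightarrow> dist (\<phi> z') (\<phi> z) < \<epsilon>"
    and small: "w + \<eta> + L * w < \<delta>"
  shows "\<bar>integral\<^sup>L (hausdorff1_restr (graph_on \<alpha> \<beta> g)) \<phi>
          - (\<Sum>j<n. \<phi> (\<alpha> + real j * w, h (\<alpha> + real j * w)) *
               measure (hausdorff1_restr (graph_on \<alpha> \<beta> g)) (strip (\<alpha> + real j * w) (\<alpha> + real j * w + w)))\<bar>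
         \<le> \<epsilon> * measure (hausdorff1_restr (graph_on \<alpha> \<beta> g)) UNIV"
proof -
  define G where "G = graph_on \<alpha> \<beta> g"
  define M where "M = hausdorff1_restr G"
  interpret fm: finite_measure M unfolding M_def G_def by (rule restr_finite[OF fin])
  define a where "a j = \<alpha> + real j * w" for j
  define p where "p j = (a j, h (a j))" for j
  define s where "s z = (\<Sum>j<n. \<phi> (p j) * indicator (strip (a j) (a j + w)) z)" for z :: "real \<times> real"
  define Bx where "Bx = {\<alpha>..\<beta>} \<times> {0..Hb}"
  have L0: "0 \<le> L" using lip by (simp add: lipschitz_on_def)
  have aj: "\<alpha> \<le> a j \<and> a j + w \<le> \<beta>" if "j < n" for j
  proof -
    have "real j + 1 \<le> real n" using that by simp
    then have "(real j + 1) * w \<le> real n * w" using w by (intro mult_right_mono) auto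
    then show ?thesis using w by (simp add: a_def \<beta> algebra_simps)
  qed
  have GB: "G \<subseteq> Bx"
  proof
    fix z assume "z \<in> G"
    then obtain x where x: "x \<in> {\<alpha>..\<beta>}" "z = (x, g x)" by (auto simp: G_def graph_on_def)
    then show "z \<in> Bx" using gh[OF x(1)] hb[OF x(1)] by (auto simp: Bx_def)
  qed
  have key: "dist (\<phi> z) (s z) < \<epsilon>" if z: "z \<in> G" "z \<noteq> (\<beta>, g \<beta>)" for z
  proof -
    obtain x where x: "x \<in> {\<alpha>..\<beta>}" "z = (x, g x)" using z by (auto simp: G_def graph_on_def)
    then have "x \<noteq> \<beta>" using z by auto
    then have "x < \<alpha> + real n * w" using x \<beta> by auto
    then obtain j where j: "j < n" "a j \<le> x" "x < a j + w"
      using cell_locate[OF w, of \<alpha> x n] x by (auto simp: a_def)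
    have ind: "indicator (strip (a i) (a i + w)) z = (if i = j then 1 else (0::real))" if "i < n" for i
    proof (cases "i = j")
      case True then show ?thesis using j x by (simp add: strip_def)
    next
      case False
      have "\<not> (a i \<le> x \<and> x < a i + w)"
        using cell_unique[OF w, of \<alpha> i x j] j False by (auto simp: a_def)
      then show ?thesis using False x by (simp add: strip_def)
    qed
    have sz: "s z = \<phi> (p j)"
    proof -
      have "s z = (\<Sum>i<n. if i = j then \<phi> (p i) else 0)"
        unfolding s_def by (intro sum.cong) (auto simp: ind)
      also have "\<dots> = \<phi> (p j)" using j by simp
      finally show ?thesis .
    qed
    have ajB: "a j \<in> {\<alpha>..\<beta>}" using aj[OF j(1)] w by auto
    have "dist (g x) (h (a j)) \<le> dist (g x) (h x) + dist (h x) (h (a j))" by (rule dist_triangle)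
    also have "dist (g x) (h x) \<le> \<eta>" using gh[OF x(1)] by (simp add: dist_real_def)
    also have "dist (h x) (h (a j)) \<le> L * dist x (a j)" by (rule lipschitz_onD[OF lip x(1) ajB])
    also have "dist x (a j) \<le> w" using j by (simp add: dist_real_def)
    finally have d2: "dist (g x) (h (a j)) \<le> \<eta> + L * w" using L0 by (simp add: mult_left_mono)
    have "dist z (p j) \<le> dist x (a j) + dist (g x) (h (a j))" unfolding x(2) p_def by (rule dist_pair_le)
    also have "\<dots> \<le> w + (\<eta> + L * w)" using j d2 by (simp add: dist_real_def)
    finally have "dist z (p j) < \<delta>" using small by simp
    moreover have "z \<in> Bx" using GB z by auto
    moreover have "p j \<in> Bx" using ajB hb[OF ajB] gh[OF ajB] by (simp add: Bx_def p_def)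
    ultimately have "dist (\<phi> z) (\<phi> (p j)) < \<epsilon>" using uc[of "p j" z] unfolding Bx_def by simp
    then show ?thesis by (simp add: sz)
  qed
  have AEk: "AE z in M. dist (\<phi> z) (s z) < \<epsilon> \<and> z \<in> Bx"
    using restr_AE[OF contg] unfolding M_def G_def[symmetric]
    by eventually_elim (use key GB in auto)
  have meas: "\<phi> \<in> borel_measurable M"
    using borel_measurable_continuous_onI[OF \<phi>c] by (simp add: M_def measurable_cong_sets[OF sets_H_restr refl])
  have "compact Bx" unfolding Bx_def by (intro compact_Times compact_Icc)
  then have "bounded (\<phi> ` Bx)" by (intro compact_imp_bounded compact_continuous_image continuous_on_subset[OF \<phi>c]) auto
  then obtain C where C: "\<And>z. z \<in> Bx \<Longrightarrow> \<bar>\<phi> z\<bar> \<le> C" unfolding bounded_real by blast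
  have "AE z in M. norm (\<phi> z) \<le> C" using AEk by eventually_elim (use C in auto)
  then have int\<phi>: "integrable M \<phi>" using meas by (rule fm.integrable_const_bound)
  have sM: "strip c d \<in> sets M" for c d by (simp add: M_def strip_borel)
  have intI: "integrable M (\<lambda>z. \<phi> (p j) * indicator (strip (a j) (a j + w)) z)" for j
    by (intro integrable_mult_right integrable_real_indicator sM) (simp add: fm.emeasure_finite less_top[symmetric])
  have ints: "integrable M s" unfolding s_def by (rule Bochner_Integration.integrable_sum) (rule intI)
  have Is: "integral\<^sup>L M s = (\<Sum>j<n. \<phi> (p j) * measure M (strip (a j) (a j + w)))"
  proof -
    have "integral\<^sup>L M s = (\<Sum>j<n. integral\<^sup>L M (\<lambda>z. \<phi> (p j) * indicator (strip (a j) (a j + w)) z))"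
      unfolding s_def by (rule Bochner_Integration.integral_sum) (rule intI)
    also have "\<dots> = (\<Sum>j<n. \<phi> (p j) * measure M (strip (a j) (a j + w)))"
      by (intro sum.cong refl) (simp add: M_def)
    finally show ?thesis .
  qed
  have i1: "integral\<^sup>L M \<phi> \<le> integral\<^sup>L M (\<lambda>z. s z + \<epsilon>)"
  proof (rule integral_mono_AE[OF int\<phi>])
    show "integrable M (\<lambda>z. s z + \<epsilon>)" using ints by simp
    show "AE z in M. \<phi> z \<le> s z + \<epsilon>" using AEk by eventually_elim (auto simp: dist_real_def)
  qed
  have i2: "integral\<^sup>L M s \<le> integral\<^sup>L M (\<lambda>z. \<phi> z + \<epsilon>)"
  proof (rule integral_mono_AE[OF ints])
    show "integrable M (\<lambda>z. \<phi> z + \<epsilon>)" using int\<phi> by simp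
    show "AE z in M. s z \<le> \<phi> z + \<epsilon>" using AEk by eventually_elim (auto simp: dist_real_def)
  qed
  have spM: "space M = UNIV" by (simp add: M_def)
  have e1: "integral\<^sup>L M (\<lambda>z. s z + \<epsilon>) = integral\<^sup>L M s + \<epsilon> * measure M UNIV"
    using Bochner_Integration.integral_add[OF ints fm.integrable_const[of \<epsilon>]] spM by simp
  have e2: "integral\<^sup>L M (\<lambda>z. \<phi> z + \<epsilon>) = integral\<^sup>L M \<phi> + \<epsilon> * measure M UNIV"
    using Bochner_Integration.integral_add[OF int\<phi> fm.integrable_const[of \<epsilon>]] spM by simp
  show ?thesis using i1 i2 e1 e2 Is unfolding M_def G_def a_def p_def by (simp add: abs_le_iff)
qed


lemma cells_bound:
  fixes w :: real
  assumes "0 < w" "j < n"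
  shows "\<alpha> \<le> \<alpha> + real j * w \<and> \<alpha> + real j * w + w \<le> \<alpha> + real n * w"
proof -
  have "real j + 1 \<le> real n" using assms by simp
  then have "(real j + 1) * w \<le> real n * w" using assms by (intro mult_right_mono) auto
  then show ?thesis using assms by (simp add: algebra_simps)
qed

lemma weak_conv_core:
  fixes h :: "real \<Rightarrow> real" and f :: "nat \<Rightarrow> real \<Rightarrow> real" and \<eta> w :: "nat \<Rightarrow> real" and nn :: "nat \<Rightarrow> nat"
  assumes \<alpha>\<beta>: "\<alpha> < \<beta>" and lip: "L-lipschitz_on {\<alpha>..\<beta>} h" and hnn: "\<And>x. x \<in> {\<alpha>..\<beta>} \<Longrightarrow> 0 \<le> h x"
    and r: "1 \<le> r"
    and contf: "\<And>k. continuous_on {\<alpha>..\<beta>} (f k)"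
    and fh: "\<And>k x. x \<in> {\<alpha>..\<beta>} \<Longrightarrow> h x \<le> f k x \<and> f k x \<le> h x + \<eta> k"
    and eta: "\<And>k. \<eta> k \<le> 1" and eta0: "\<eta> \<longlonglongrightarrow> 0"
    and nn: "\<And>k. 0 < nn k" and wdef: "\<And>k. w k = (\<beta> - \<alpha>) / real (nn k)" and w0: "w \<longlonglongrightarrow> 0"
    and cellH: "\<And>k j. j < nn k \<Longrightarrow>
        hausdorff1 (graph_on (\<alpha> + real j * w k) (\<alpha> + real j * w k + w k) (f k))
        = ennreal r * hausdorff1 (graph_on (\<alpha> + real j * w k) (\<alpha> + real j * w k + w k) h)"
    and totH: "\<And>k. hausdorff1 (graph_on \<alpha> \<beta> (f k)) = ennreal r * hausdorff1 (graph_on \<alpha> \<beta> h)"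
  shows "weak_star_conv (\<lambda>k. hausdorff1_restr (graph_on \<alpha> \<beta> (f k))) r (hausdorff1_restr (graph_on \<alpha> \<beta> h))"
  unfolding weak_star_conv_def
proof (intro allI impI)
  fix \<phi> :: "real \<times> real \<Rightarrow> real" assume "continuous_on UNIV \<phi> \<and> compact (closure {z. \<phi> z \<noteq> 0})"
  then have \<phi>c: "continuous_on UNIV \<phi>" by simp
  define M0 where "M0 = hausdorff1_restr (graph_on \<alpha> \<beta> h)"
  define Mk where "Mk k = hausdorff1_restr (graph_on \<alpha> \<beta> (f k))" for k
  have L0: "0 \<le> L" using lip by (simp add: lipschitz_on_def)
  have conth: "continuous_on {\<alpha>..\<beta>} h" by (rule lipschitz_on_continuous_on[OF lip])
  have finh: "hausdorff1 (graph_on \<alpha> \<beta> h) < \<infinity>"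
  proof -
    have "hausdorff1 (graph_on \<alpha> \<beta> h) \<le> ennreal ((1 + L) * (\<beta> - \<alpha>))"
      using H_graph_upper[OF lip] \<alpha>\<beta> by simp
    then show ?thesis using ennreal_less_top[of "(1 + L) * (\<beta> - \<alpha>)"] by (simp add: le_less_trans)
  qed
  define Htot where "Htot = enn2real (hausdorff1 (graph_on \<alpha> \<beta> h))"
  have Htot0: "0 \<le> Htot" by (simp add: Htot_def)
  have HtotE: "hausdorff1 (graph_on \<alpha> \<beta> h) = ennreal Htot"
    using finh by (simp add: Htot_def ennreal_enn2real_if less_top[symmetric])
  have finf: "hausdorff1 (graph_on \<alpha> \<beta> (f k)) < \<infinity>" for k
  proof -
    have "hausdorff1 (graph_on \<alpha> \<beta> (f k)) = ennreal (r * Htot)"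
      using totH[of k] HtotE r Htot0 by (simp add: ennreal_mult)
    then show ?thesis by simp
  qed
  have r0: "0 \<le> r" using r by simp
  have mM0: "measure M0 UNIV = Htot" unfolding M0_def by (simp add: restr_measure Htot_def)
  have mMk: "measure (Mk k) UNIV = r * Htot" for k
    unfolding Mk_def using totH[of k] HtotE r0 Htot0 by (simp add: restr_measure ennreal_mult[symmetric])
  have wpos: "0 < w k" for k using nn[of k] \<alpha>\<beta> by (simp add: wdef)
  have \<beta>eq: "\<beta> = \<alpha> + real (nn k) * w k" for k using nn[of k] by (simp add: wdef)
  have strip_eq: "measure (Mk k) (strip (\<alpha> + real j * w k) (\<alpha> + real j * w k + w k))
      = r * measure M0 (strip (\<alpha> + real j * w k) (\<alpha> + real j * w k + w k))" if j: "j < nn k" for k j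
  proof -
    have cb: "\<alpha> \<le> \<alpha> + real j * w k" "\<alpha> + real j * w k \<le> \<alpha> + real j * w k + w k" "\<alpha> + real j * w k + w k \<le> \<beta>"
      using cells_bound[OF wpos[of k] j, of \<alpha>] \<beta>eq[of k] wpos[of k] by auto
    have "measure (Mk k) (strip (\<alpha> + real j * w k) (\<alpha> + real j * w k + w k))
        = enn2real (hausdorff1 (graph_on (\<alpha> + real j * w k) (\<alpha> + real j * w k + w k) (f k)))"
      unfolding Mk_def by (simp add: restr_measure strip_borel strip_graph[OF cb])
    also have "\<dots> = r * enn2real (hausdorff1 (graph_on (\<alpha> + real j * w k) (\<alpha> + real j * w k + w k) h))"
      using cellH[OF j] r0 by (simp add: enn2real_mult)
    also have "\<dots> = r * measure M0 (strip (\<alpha> + real j * w k) (\<alpha> + real j * w k + w k))"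
      unfolding M0_def by (simp add: restr_measure strip_borel strip_graph[OF cb])
    finally show ?thesis .
  qed
  have eta_nn: "0 \<le> \<eta> k" for k using fh[of \<alpha> k] \<alpha>\<beta> by auto
  obtain xm where xm: "\<forall>y\<in>{\<alpha>..\<beta>}. h y \<le> h xm"
    using continuous_attains_sup[OF compact_Icc _ conth] \<alpha>\<beta> by auto
  define Hb where "Hb = h xm + 1"
  define Bx where "Bx = {\<alpha>..\<beta>} \<times> {0..Hb}"
  have "uniformly_continuous_on Bx \<phi>"
    unfolding Bx_def by (intro compact_uniformly_continuous continuous_on_subset[OF \<phi>c] compact_Times compact_Icc) auto
  note uc = this[unfolded uniformly_continuous_on_def]
  show "(\<lambda>k. integral\<^sup>L (hausdorff1_restr (graph_on \<alpha> \<beta> (f k))) \<phi>) \<longlonglongrightarrow> r * integral\<^sup>L (hausdorff1_restr (graph_on \<alpha> \<beta> h)) \<phi>"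
  proof (rule LIMSEQ_I)
    fix e :: real assume e: "0 < e"
    define \<epsilon> where "\<epsilon> = e / (2 * r * Htot + 1)"
    have den: "0 < 2 * r * Htot + 1" using r0 Htot0 by (simp add: add_nonneg_pos)
    have \<epsilon>: "0 < \<epsilon>" using e den by (simp add: \<epsilon>_def)
    have \<epsilon>e: "2 * r * Htot * \<epsilon> < e"
    proof -
      have "2 * r * Htot * \<epsilon> = e * (2 * r * Htot) / (2 * r * Htot + 1)" by (simp add: \<epsilon>_def)
      also have "\<dots> < e" using e den by (simp add: divide_less_eq)
      finally show ?thesis .
    qed
    obtain \<delta> where \<delta>: "\<delta> > 0" and ucd: "\<forall>x\<in>Bx. \<forall>x'\<in>Bx. dist x' x < \<delta> \<longrightarrow> dist (\<phi> x') (\<phi> x) < \<epsilon>"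
      using uc \<epsilon> by blast
    have "(\<lambda>k. w k + \<eta> k + L * w k) \<longlonglongrightarrow> 0 + 0 + L * 0"
      by (intro tendsto_add tendsto_mult w0 eta0 tendsto_const)
    then have "eventually (\<lambda>k. w k + \<eta> k + L * w k < \<delta>) sequentially"
      using \<delta> by (intro order_tendstoD(2)) auto
    then obtain K where K: "\<And>k. K \<le> k \<Longrightarrow> w k + \<eta> k + L * w k < \<delta>" by (auto simp: eventually_sequentially)
    show "\<exists>K. \<forall>k\<ge>K. norm (integral\<^sup>L (hausdorff1_restr (graph_on \<alpha> \<beta> (f k))) \<phi> - r * integral\<^sup>L (hausdorff1_restr (graph_on \<alpha> \<beta> h)) \<phi>) < e"
    proof (intro exI allI impI)
      fix k assume "K \<le> k"
      then have sm: "w k + \<eta> k + L * w k < \<delta>" by (rule K)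
      define S where "S g = (\<Sum>j<nn k. \<phi> (\<alpha> + real j * w k, h (\<alpha> + real j * w k)) *
               measure (hausdorff1_restr (graph_on \<alpha> \<beta> g)) (strip (\<alpha> + real j * w k) (\<alpha> + real j * w k + w k)))" for g
      have A1: "\<bar>integral\<^sup>L (Mk k) \<phi> - S (f k)\<bar> \<le> \<epsilon> * measure (Mk k) UNIV"
        unfolding Mk_def S_def
      proof (rule approx_integral[OF nn wpos \<beta>eq contf finf lip, where \<eta> = "\<eta> k" and Hb = Hb and \<delta> = \<delta>])
        show "\<And>x. x \<in> {\<alpha>..\<beta>} \<Longrightarrow> h x \<le> f k x \<and> f k x \<le> h x + \<eta> k" by (rule fh)
        show "\<And>x. x \<in> {\<alpha>..\<beta>} \<Longrightarrow> 0 \<le> h x \<and> h x + \<eta> k \<le> Hb" using hnn xm eta[of k] by (force simp: Hb_def)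
        show "\<And>z z'. z \<in> {\<alpha>..\<beta>} \<times> {0..Hb} \<Longrightarrow> z' \<in> {\<alpha>..\<beta>} \<times> {0..Hb} \<Longrightarrow> dist z' z < \<delta> \<Longrightarrow> dist (\<phi> z') (\<phi> z) < \<epsilon>"
          using ucd unfolding Bx_def by blast
      qed (use \<phi>c sm in auto)
      have A0: "\<bar>integral\<^sup>L M0 \<phi> - S h\<bar> \<le> \<epsilon> * measure M0 UNIV"
        unfolding M0_def S_def
      proof (rule approx_integral[OF nn wpos \<beta>eq conth finh lip, where \<eta> = 0 and Hb = Hb and \<delta> = \<delta>])
        show "\<And>z z'. z \<in> {\<alpha>..\<beta>} \<times> {0..Hb} \<Longrightarrow> z' \<in> {\<alpha>..\<beta>} \<times> {0..Hb} \<Longrightarrow> dist z' z < \<delta> \<Longrightarrow> dist (\<phi> z') (\<phi> z) < \<epsilon>"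
          using ucd unfolding Bx_def by blast
        show "w k + 0 + L * w k < \<delta>" using sm eta_nn[of k] by simp
      qed (use \<phi>c hnn xm in \<open>force simp: Hb_def\<close>)+
      have Sk: "S (f k) = r * S h"
        unfolding S_def sum_distrib_left
        by (intro sum.cong refl) (simp add: strip_eq[unfolded Mk_def M0_def])
      have "\<bar>integral\<^sup>L (Mk k) \<phi> - r * integral\<^sup>L M0 \<phi>\<bar> \<le> \<bar>integral\<^sup>L (Mk k) \<phi> - S (f k)\<bar> + r * \<bar>integral\<^sup>L M0 \<phi> - S h\<bar>"
      proof -
        have eq: "integral\<^sup>L (Mk k) \<phi> - r * integral\<^sup>L M0 \<phi> = (integral\<^sup>L (Mk k) \<phi> - S (f k)) + r * (S h - integral\<^sup>L M0 \<phi>)"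
          by (simp add: Sk algebra_simps)
        have "\<bar>r * (S h - integral\<^sup>L M0 \<phi>)\<bar> = r * \<bar>integral\<^sup>L M0 \<phi> - S h\<bar>"
          using r0 by (simp add: abs_mult abs_minus_commute)
        then show ?thesis unfolding eq by (metis abs_triangle_ineq)
      qed
      also have "\<dots> \<le> \<epsilon> * (r * Htot) + r * (\<epsilon> * Htot)"
        using A1 A0 mMk mM0 r0 by (intro add_mono mult_left_mono) auto
      also have "\<dots> = 2 * r * Htot * \<epsilon>" by (simp add: algebra_simps)
      finally show "norm (integral\<^sup>L (hausdorff1_restr (graph_on \<alpha> \<beta> (f k))) \<phi> - r * integral\<^sup>L (hausdorff1_restr (graph_on \<alpha> \<beta> h)) \<phi>) < e"
        using \<epsilon>e by (simp add: Mk_def M0_def)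
    qed
  qed
qed


lemma lip_sum:
  fixes f :: "'i \<Rightarrow> real \<Rightarrow> real"
  assumes "finite I" "\<And>i. i \<in> I \<Longrightarrow> (C i)-lipschitz_on U (f i)" "\<And>i. 0 \<le> C i"
  shows "(\<Sum>i\<in>I. C i)-lipschitz_on U (\<lambda>x. \<Sum>i\<in>I. f i x)"
  using assms
proof (induct I rule: finite_induct)
  case empty
  then show ?case using lipschitz_on_constant[of U 0] by simp
next
  case (insert i I)
  have "(C i + (\<Sum>i\<in>I. C i))-lipschitz_on U (\<lambda>x. f i x + (\<Sum>i\<in>I. f i x))"
    using insert by (intro lipschitz_on_add) auto
  then show ?case using insert by simp
qed

theorem proposition5p5:
  fixes h :: "real \<Rightarrow> real" and \<alpha> \<beta> r :: real
  assumes "\<alpha> < \<beta>"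
    and "\<exists>L. L-lipschitz_on {\<alpha>..\<beta>} h"
    and "\<forall>x\<in>{\<alpha>..\<beta>}. h x \<ge> 0"
    and "r \<ge> 1"
  shows "\<exists>hs :: nat \<Rightarrow> real \<Rightarrow> real.
     (\<forall>k. (\<exists>L. L-lipschitz_on {\<alpha>..\<beta>} (hs k)) \<and> (\<forall>x\<in>{\<alpha>..\<beta>}. hs k x \<ge> 0)) \<and>
     (\<forall>k. hausdorff1 (graph_on \<alpha> \<beta> (hs k)) = ennreal r * hausdorff1 (graph_on \<alpha> \<beta> h)) \<and>
     (\<forall>k. hs k \<alpha> = h \<alpha> \<and> hs k \<beta> = h \<beta>) \<and>
     (\<forall>k. \<forall>x\<in>{\<alpha>..\<beta>}. h x \<le> hs k x) \<and>
     uniform_limit {\<alpha>..\<beta>} hs h sequentially \<and>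
     weak_star_conv (\<lambda>k. hausdorff1_restr (graph_on \<alpha> \<beta> (hs k))) r
                    (hausdorff1_restr (graph_on \<alpha> \<beta> h))"
proof -
  note \<alpha>\<beta> = assms(1)
  obtain L where lip: "L-lipschitz_on {\<alpha>..\<beta>} h" using assms(2) by blast
  have hnn: "\<And>x. x \<in> {\<alpha>..\<beta>} \<Longrightarrow> 0 \<le> h x" using assms(3) by auto
  have r: "1 \<le> r" using assms(4) by simp
  have L0: "0 \<le> L" using lip by (simp add: lipschitz_on_def)
  define c0 where "c0 = L + r * (1 + L)"
  define N0 :: nat where "N0 = nat \<lceil>(\<beta> - \<alpha>) * c0 / 2\<rceil> + 1"
  define nn where "nn k = Suc k * N0" for k
  define w where "w k = (\<beta> - \<alpha>) / real (nn k)" for k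
  define \<eta> where "\<eta> k = 1 / real (Suc k)" for k
  have N0: "0 < N0" by (simp add: N0_def)
  have nn: "0 < nn k" for k using N0 by (simp add: nn_def)
  have wpos: "0 < w k" for k using nn[of k] \<alpha>\<beta> by (simp add: w_def)
  have eta_pos: "0 < \<eta> k" for k by (simp add: \<eta>_def)
  have w_eta: "w k = ((\<beta> - \<alpha>) / real N0) * \<eta> k" for k by (simp add: w_def \<eta>_def nn_def algebra_simps)
  have \<beta>eq: "\<beta> = \<alpha> + real (nn k) * w k" for k using nn[of k] by (simp add: w_def)
  have c0N0: "(\<beta> - \<alpha>) * c0 / real N0 \<le> 2"
  proof -
    have "(\<beta> - \<alpha>) * c0 / 2 \<le> real N0" unfolding N0_def by linarith
    then show ?thesis using N0 by (simp add: divide_le_eq mult.commute)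
  qed
  have cond: "(L + r * (1 + L)) * w k \<le> 2 * \<eta> k" for k
  proof -
    have "(L + r * (1 + L)) * w k = ((\<beta> - \<alpha>) * c0 / real N0) * \<eta> k" by (simp add: w_eta c0_def)
    also have "\<dots> \<le> 2 * \<eta> k" using c0N0 eta_pos[of k] by (intro mult_right_mono) auto
    finally show ?thesis .
  qed
  define a where "a k j = \<alpha> + real j * w k" for k j
  define P where "P k j t \<longleftrightarrow> t \<in> {0..1} \<and>
      hausdorff1 (graph_on (a k j) (a k j + w k) (\<lambda>x. h x + (t * \<eta> k) * tent (a k j) (w k) x))
        = ennreal r * hausdorff1 (graph_on (a k j) (a k j + w k) h)" for k j t
  have exP: "\<exists>t. P k j t" if j: "j < nn k" for k j
  proof -
    have cb: "\<alpha> \<le> a k j \<and> a k j + w k \<le> \<beta>"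
      using cells_bound[OF wpos[of k] j, of \<alpha>] \<beta>eq[of k] by (simp add: a_def)
    have "{a k j..a k j + w k} \<subseteq> {\<alpha>..\<beta>}" using cb by auto
    with lip have "L-lipschitz_on {a k j..a k j + w k} h" by (rule lipschitz_on_subset)
    from cell_exists[OF wpos this eta_pos r cond] show ?thesis unfolding P_def by blast
  qed
  define t where "t k j = (SOME t. P k j t)" for k j
  have tP: "P k j (t k j)" if "j < nn k" for k j unfolding t_def by (rule someI_ex[OF exP[OF that]])
  have t01: "0 \<le> t k j \<and> t k j \<le> 1" if "j < nn k" for k j using tP[OF that] by (simp add: P_def)
  define hs where "hs k x = h x + \<eta> k * (\<Sum>j<nn k. t k j * tent (\<alpha> + real j * w k) (w k) x)" for k x
  have sum_nn: "0 \<le> (\<Sum>j<nn k. t k j * tent (\<alpha> + real j * w k) (w k) x)" for k x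
    using t01 by (intro sum_nonneg mult_nonneg_nonneg tent_nonneg) auto
  have sum_le1: "(\<Sum>j<nn k. t k j * tent (\<alpha> + real j * w k) (w k) x) \<le> 1" if x: "x \<in> {\<alpha>..\<beta>}" for k x
  proof (cases "x = \<beta>")
    case True
    then show ?thesis using tent_sum_out[OF wpos, where x=x and \<alpha>=\<alpha> and n="nn k" and c="t k"] \<beta>eq[of k] by simp
  next
    case False
    then have "x < \<alpha> + real (nn k) * w k" using x \<beta>eq[of k] by auto
    then obtain j where j: "j < nn k" "\<alpha> + real j * w k \<le> x" "x < \<alpha> + real j * w k + w k"
      using cell_locate[OF wpos, of \<alpha> x "nn k"] x by auto
    have "(\<Sum>j<nn k. t k j * tent (\<alpha> + real j * w k) (w k) x) = t k j * tent (\<alpha> + real j * w k) (w k) x"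
      using tent_sum_cell[OF wpos j(1) j(2), where c="t k"] j(3) by simp
    also have "\<dots> \<le> 1 * 1"
      using t01[OF j(1)] tent_le1[OF wpos] tent_nonneg by (intro mult_mono) auto
    finally show ?thesis by simp
  qed
  have lipk: "\<exists>L'. L'-lipschitz_on {\<alpha>..\<beta>} (hs k)" for k
  proof -
    have "(\<Sum>j<nn k. \<bar>t k j\<bar> * (2 / w k))-lipschitz_on {\<alpha>..\<beta>} (\<lambda>x. \<Sum>j<nn k. t k j * tent (\<alpha> + real j * w k) (w k) x)"
      using wpos[of k] by (intro lip_sum lipschitz_on_cmult_real tent_lip) auto
    then have "(L + \<bar>\<eta> k\<bar> * (\<Sum>j<nn k. \<bar>t k j\<bar> * (2 / w k)))-lipschitz_on {\<alpha>..\<beta>} (hs k)"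
      unfolding hs_def by (intro lipschitz_on_add lip lipschitz_on_cmult_real)
    then show ?thesis by blast
  qed
  have conthk: "continuous_on {\<alpha>..\<beta>} (hs k)" for k using lipk[of k] lipschitz_on_continuous_on by blast
  have fh: "h x \<le> hs k x \<and> hs k x \<le> h x + \<eta> k" if "x \<in> {\<alpha>..\<beta>}" for k x
  proof -
    have "\<eta> k * (\<Sum>j<nn k. t k j * tent (\<alpha> + real j * w k) (w k) x) \<le> \<eta> k * 1"
      using sum_le1[OF that] eta_pos[of k] by (intro mult_left_mono) auto
    then show ?thesis using sum_nn[of k x] eta_pos[of k] by (simp add: hs_def)
  qed
  have cellhs: "graph_on (a k j) (a k j + w k) (hs k) = graph_on (a k j) (a k j + w k) (\<lambda>x. h x + (t k j * \<eta> k) * tent (a k j) (w k) x)"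
    if j: "j < nn k" for k j
  proof (rule graph_on_cong)
    fix x assume "x \<in> {a k j..a k j + w k}"
    then show "hs k x = h x + (t k j * \<eta> k) * tent (a k j) (w k) x"
      using tent_sum_cell[OF wpos j, where \<alpha>=\<alpha> and x=x and c="t k"] by (simp add: hs_def a_def)
  qed
  have cellH: "hausdorff1 (graph_on (a k j) (a k j + w k) (hs k)) = ennreal r * hausdorff1 (graph_on (a k j) (a k j + w k) h)"
    if j: "j < nn k" for k j
    using tP[OF j] unfolding cellhs[OF j] P_def by simp
  have totH: "hausdorff1 (graph_on \<alpha> \<beta> (hs k)) = ennreal r * hausdorff1 (graph_on \<alpha> \<beta> h)" for k
  proof -
    have "hausdorff1 (graph_on \<alpha> \<beta> (hs k)) = (\<Sum>j<nn k. hausdorff1 (graph_on (a k j) (a k j + w k) (hs k)))"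
      using H_graph_cells[of "w k" \<alpha> "nn k" "hs k"] wpos[of k] \<beta>eq[of k] by (simp add: a_def)
    also have "\<dots> = (\<Sum>j<nn k. ennreal r * hausdorff1 (graph_on (a k j) (a k j + w k) h))"
      by (intro sum.cong refl cellH) auto
    also have "\<dots> = ennreal r * (\<Sum>j<nn k. hausdorff1 (graph_on (a k j) (a k j + w k) h))"
      by (simp add: sum_distrib_left)
    also have "(\<Sum>j<nn k. hausdorff1 (graph_on (a k j) (a k j + w k) h)) = hausdorff1 (graph_on \<alpha> \<beta> h)"
      using H_graph_cells[of "w k" \<alpha> "nn k" h] wpos[of k] \<beta>eq[of k] by (simp add: a_def)
    finally show ?thesis .
  qed
  have eta_eq: "\<eta> = (\<lambda>n. inverse (real (Suc n)))" by (simp add: \<eta>_def fun_eq_iff inverse_eq_divide)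
  have eta0: "\<eta> \<longlonglongrightarrow> 0" unfolding eta_eq by (rule LIMSEQ_inverse_real_of_nat)
  have w0: "w \<longlonglongrightarrow> 0"
  proof -
    have "(\<lambda>k. ((\<beta> - \<alpha>) / real N0) * \<eta> k) \<longlonglongrightarrow> ((\<beta> - \<alpha>) / real N0) * 0"
      by (intro tendsto_mult tendsto_const eta0)
    then show ?thesis by (simp add: w_eta[abs_def])
  qed
  show ?thesis
  proof (intro exI[of _ hs] conjI allI ballI)
    fix k
    show "\<exists>L. L-lipschitz_on {\<alpha>..\<beta>} (hs k)" by (rule lipk)
    show "hausdorff1 (graph_on \<alpha> \<beta> (hs k)) = ennreal r * hausdorff1 (graph_on \<alpha> \<beta> h)" by (rule totH)
    show "hs k \<alpha> = h \<alpha>" using tent_sum_out[OF wpos, where x=\<alpha> and \<alpha>=\<alpha> and n="nn k" and c="t k"] by (simp add: hs_def)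
    show "hs k \<beta> = h \<beta>" using tent_sum_out[OF wpos, where x=\<beta> and \<alpha>=\<alpha> and n="nn k" and c="t k"] \<beta>eq[of k] by (simp add: hs_def)
  next
    fix k x assume x: "x \<in> {\<alpha>..\<beta>}"
    show "0 \<le> hs k x" using fh[OF x, of k] hnn[OF x] by simp
  next
    fix k x assume x: "x \<in> {\<alpha>..\<beta>}"
    show "h x \<le> hs k x" using fh[OF x] by simp
  next
    show "uniform_limit {\<alpha>..\<beta>} hs h sequentially"
    proof (rule uniform_limitI)
      fix e :: real assume "0 < e"
      then have "eventually (\<lambda>k. \<eta> k < e) sequentially" using eta0 by (intro order_tendstoD(2)) auto
      then show "\<forall>\<^sub>F k in sequentially. \<forall>x\<in>{\<alpha>..\<beta>}. dist (hs k x) (h x) < e"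
      proof (rule eventually_mono)
        fix k assume "\<eta> k < e"
        then show "\<forall>x\<in>{\<alpha>..\<beta>}. dist (hs k x) (h x) < e"
        proof (intro ballI)
          fix x assume x: "x \<in> {\<alpha>..\<beta>}"
          have "h x \<le> hs k x" "hs k x \<le> h x + \<eta> k" using fh[OF x, of k] by auto
          then show "dist (hs k x) (h x) < e" using \<open>\<eta> k < e\<close> by (simp add: dist_real_def)
        qed
      qed
    qed
  next
    show "weak_star_conv (\<lambda>k. hausdorff1_restr (graph_on \<alpha> \<beta> (hs k))) r (hausdorff1_restr (graph_on \<alpha> \<beta> h))"
    proof (rule weak_conv_core[OF \<alpha>\<beta> lip hnn r conthk fh _ eta0 nn _ w0])
      show "\<And>k. \<eta> k \<le> 1" by (simp add: \<eta>_def)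
      show "\<And>k. w k = (\<beta> - \<alpha>) / real (nn k)" by (simp add: w_def)
      show "\<And>k j. j < nn k \<Longrightarrow> hausdorff1 (graph_on (\<alpha> + real j * w k) (\<alpha> + real j * w k + w k) (hs k))
              = ennreal r * hausdorff1 (graph_on (\<alpha> + real j * w k) (\<alpha> + real j * w k + w k) h)"
        using cellH by (simp add: a_def)
      show "\<And>k. hausdorff1 (graph_on \<alpha> \<beta> (hs k)) = ennreal r * hausdorff1 (graph_on \<alpha> \<beta> h)" by (rule totH)
    qed
  qed
qed

end
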